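(* Let $A:\mathbb{R}^d\rightrightarrows\mathbb{R}^d$ be maximally monotone, $B:\mathbb{R}^d\to\mathbb{R}^d$ $L_B$-Lipschitz and $\mu$-strongly monotone ($\mu>0$), $z^\star\in(A+B)^{-1}(0)$, and $\widetilde B$ a stochastic oracle with $\mathbb{E}[\widetilde B(x)]=B(x)$, $\mathbb{E}\|\widetilde B(x)-B(x)\|^2\le\sigma^2$. Let $N\ge2$ and let $y^{\mathrm{out}}$ be the output of the MLMC estimator described in the context started at $z_0$. Then $$\|\mathbb{E}[y^{\mathrm{out}}]-z^\star\|^2\le\frac{\frac{12L_B}{\mu}\|z_0-z^\star\|^2+\frac{96\sigma^2}{\mu^2}}{N},\qquad\mathbb{E}\|y^{\mathrm{out}}-z^\star\|^2\le14\Big(\frac{6L_B}{\mu}\|z_0-z^\star\|^2+\frac{48\sigma^2}{\mu^2}\Big)\log_2N,$$ and the expected number of calls to $\widetilde B$ is $O(\log_2N)$.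
   Context: For an operator $A$, $J_A=(\mathrm{Id}+A)^{-1}$. Stochastic FBF run for $T$ iterations from $z_0$: with $\tau_t=\frac{2}{(t+1)\mu+6L_B}$, for $t=0,\dots,T-1$: $z_{t+1/2}=J_{\tau_tA}(z_t-\tau_t\widetilde B(z_t))$, $z_{t+1}=z_{t+1/2}+\tau_t\widetilde B(z_t)-\tau_t\widetilde B(z_{t+1/2})$, with independent oracle samples; output $z_T$. MLMC estimator: let $y^i$ be the output of stochastic FBF run for $2^i$ iterations from $z_0$ ($i\ge0$); draw $I$ with $\Pr(I=i)=2^{-i}$ for $i=1,2,\dots$; set $y^{\mathrm{out}}=y^0+2^I(y^I-y^{I-1})$ if $2^I\le N$, and $y^{\mathrm{out}}=y^0$ otherwise. *)

theory Defs
  imports "HOL-Analysis.Analysis" "HOL-Probability.Probability"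
begin

definition monotone_op :: "('a::real_inner \<Rightarrow> 'a set) \<Rightarrow> bool" where
  "monotone_op A \<longleftrightarrow> (\<forall>x y u v. u \<in> A x \<longrightarrow> v \<in> A y \<longrightarrow> inner (u - v) (x - y) \<ge> 0)"

definition maximal_monotone :: "('a::real_inner \<Rightarrow> 'a set) \<Rightarrow> bool" where
  "maximal_monotone A \<longleftrightarrow> monotone_op A \<and>
     (\<forall>A'. monotone_op A' \<and> (\<forall>x. A x \<subseteq> A' x) \<longrightarrow> A' = A)"

definition strongly_monotone :: "real \<Rightarrow> ('a::real_inner \<Rightarrow> 'a) \<Rightarrow> bool" where
  "strongly_monotone \<mu> B \<longleftrightarrow> (\<forall>x y. inner (B x - B y) (x - y) \<ge> \<mu> * (norm (x - y))\<^sup>2)"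

definition scale_op :: "real \<Rightarrow> ('a::real_vector \<Rightarrow> 'a set) \<Rightarrow> 'a \<Rightarrow> 'a set" where
  "scale_op \<tau> A = (\<lambda>z. (\<lambda>u. \<tau> *\<^sub>R u) ` A z)"

text \<open>Resolvent J_A = (Id + A)^{-1}: J_A x is the point p with x \<in> p + A p
  (single-valued and everywhere defined for maximally monotone A).\<close>
definition resolvent :: "('a::real_vector \<Rightarrow> 'a set) \<Rightarrow> 'a \<Rightarrow> 'a" where
  "resolvent A x = (THE p. x - p \<in> A p)"

definition fbf_step :: "nat \<Rightarrow> real \<Rightarrow> real \<Rightarrow> real" where
  "fbf_step t \<mu> L = 2 / ((real t + 1) * \<mu> + 6 * L)"

text \<open>The oracle is Bt x w, where w is a sample; the sample sequence
  \<xi> supplies independent samples: \<xi>(2t) for the call at z_t and \<xi>(2t+1) for the call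
  at z_{t+1/2}.\<close>
primrec fbf :: "('a::real_vector \<Rightarrow> 'a set) \<Rightarrow> ('a \<Rightarrow> 'w \<Rightarrow> 'a) \<Rightarrow> real \<Rightarrow> real
    \<Rightarrow> 'a \<Rightarrow> (nat \<Rightarrow> 'w) \<Rightarrow> nat \<Rightarrow> 'a" where
  "fbf A Bt \<mu> L z0 \<xi> 0 = z0"
| "fbf A Bt \<mu> L z0 \<xi> (Suc t) =
     (let z = fbf A Bt \<mu> L z0 \<xi> t;
          \<tau> = fbf_step t \<mu> L;
          g = Bt z (\<xi> (2 * t));
          zh = resolvent (scale_op \<tau> A) (z - \<tau> *\<^sub>R g)
      in zh + \<tau> *\<^sub>R g - \<tau> *\<^sub>R Bt zh (\<xi> (2 * t + 1)))"

text \<open>Distribution of the level I: Pr(I = i) = 2^(-i) for i = 1, 2, ...\<close>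
definition level_pmf :: "nat pmf" where
  "level_pmf = map_pmf Suc (geometric_pmf (1/2))"

text \<open>MLMC output for level i and sample sequence \<xi>; y^i is the output of FBF run
  for 2^i iterations from z0 (all y^i computed along the same sample path).\<close>
definition mlmc_out :: "('a::real_vector \<Rightarrow> 'a set) \<Rightarrow> ('a \<Rightarrow> 'w \<Rightarrow> 'a) \<Rightarrow> real \<Rightarrow> real
    \<Rightarrow> 'a \<Rightarrow> nat \<Rightarrow> nat \<Rightarrow> (nat \<Rightarrow> 'w) \<Rightarrow> 'a" where
  "mlmc_out A Bt \<mu> L z0 N i \<xi> =
     (let y = (\<lambda>k. fbf A Bt \<mu> L z0 \<xi> (2 ^ k))
      in if 2 ^ i \<le> N then y 0 + (2 ^ i :: real) *\<^sub>R (y i - y (i - 1)) else y 0)"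

text \<open>Number of oracle calls of the MLMC estimator at level i (2 calls per FBF
  iteration; running 2^I iterations also produces y^0 and y^(I-1) as prefixes).\<close>
definition mlmc_calls :: "nat \<Rightarrow> nat \<Rightarrow> nat" where
  "mlmc_calls N i = (if 2 ^ i \<le> N then 2 * 2 ^ i else 2)"

definition mlmc_space :: "'w measure \<Rightarrow> (nat \<times> (nat \<Rightarrow> 'w)) measure" where
  "mlmc_space P = measure_pmf level_pmf \<Otimes>\<^sub>M (\<Pi>\<^sub>M t\<in>UNIV. P)"

end

theory Submission
  imports Defs
begin

lemma sym_double_sum_le:
  fixes y v :: "'e \<Rightarrow> 'a::real_inner"
  assumes F: "finite F" and m: "\<And>i. i \<in> F \<Longrightarrow> m i \<ge> (0::real)"
    and mono: "\<And>i j. i \<in> F \<Longrightarrow> j \<in> F \<Longrightarrow> inner (v i - v j) (y i - y j) \<ge> 0"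
  shows "(\<Sum>i\<in>F. \<Sum>j\<in>F. m i * m j * inner (v i) (y j - y i)) \<le> 0"
proof -
  let ?S = "(\<Sum>i\<in>F. \<Sum>j\<in>F. m i * m j * inner (v i) (y j - y i))"
  have sw: "?S = (\<Sum>i\<in>F. \<Sum>j\<in>F. m j * m i * inner (v j) (y i - y j))"
    by (rule sum.swap)
  have "2 * ?S = (\<Sum>i\<in>F. \<Sum>j\<in>F. m i * m j * inner (v i) (y j - y i) + m j * m i * inner (v j) (y i - y j))"
    by (subst mult_2, subst sw) (simp only: sum.distrib[symmetric]) 
  also have "\<dots> = (\<Sum>i\<in>F. \<Sum>j\<in>F. - (m i * m j * inner (v i - v j) (y i - y j)))"
    by (intro sum.cong refl) (simp add: inner_diff_left inner_diff_right algebra_simps)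
  also have "\<dots> \<le> 0"
    by (intro sum_nonpos) (simp add: m mono)
  finally show ?thesis by simp
qed

lemma minty_finite:
  fixes y v :: "'e \<Rightarrow> 'a::euclidean_space"
  assumes F: "finite F" "F \<noteq> {}" and c: "c > 0"
    and mono: "\<And>i j. i \<in> F \<Longrightarrow> j \<in> F \<Longrightarrow> inner (v i - v j) (y i - y j) \<ge> 0"
  shows "\<exists>p. \<forall>i\<in>F. inner (p + c *\<^sub>R v i - x) (p - y i) \<le> 0"
proof -
  define K where "K = convex hull (y ` F)"
  define g where "g i p = inner (p + c *\<^sub>R v i - x) (p - y i)" for i p
  define m where "m i p = max 0 (g i p)" for i p
  define s where "s p = (\<Sum>i\<in>F. m i p)" for p
  define f where "f p = inverse (1 + s p) *\<^sub>R (p + (\<Sum>i\<in>F. m i p *\<^sub>R y i))" for p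
  have m0: "m i p \<ge> 0" for i p by (simp add: m_def)
  have s0: "s p \<ge> 0" for p unfolding s_def by (intro sum_nonneg m0)
  have K: "compact K" "convex K" "K \<noteq> {}"
    using F by (auto simp: K_def compact_convex_hull finite_imp_compact)
  have yK: "y i \<in> K" if "i \<in> F" for i
    using that unfolding K_def by (meson hull_inc image_eqI)
  have contg: "continuous_on UNIV (g i)" for i
    unfolding g_def by (intro continuous_intros)
  have contm: "continuous_on UNIV (m i)" for i
    unfolding m_def using contg[of i] by (intro continuous_intros) auto
  have conts: "continuous_on UNIV s"
    unfolding s_def using contm by (intro continuous_on_sum) auto
  have contf: "continuous_on K f"
    unfolding f_def
    apply (intro continuous_intros continuous_on_subset[OF conts] continuous_on_subset[OF contm])
    using s0 by (auto simp: add_nonneg_eq_0_iff)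
  have fK: "f \<in> K \<rightarrow> K"
  proof
    fix p assume pK: "p \<in> K"
    show "f p \<in> K"
    proof (cases "s p = 0")
      case True
      then have "\<forall>i\<in>F. m i p = 0" using F m0 unfolding s_def by (simp add: sum_nonneg_eq_0_iff)
      then show ?thesis using True pK by (simp add: f_def)
    next
      case False
      then have sp: "s p > 0" using s0 less_eq_real_def by auto
      define q where "q = (\<Sum>i\<in>F. (m i p / s p) *\<^sub>R y i)"
      have qK: "q \<in> K" unfolding q_def
        apply (rule convex_sum[OF F(1) K(2)])
        using sp m0 yK by (auto simp: sum_divide_distrib[symmetric] s_def)
      have "f p = (1 / (1 + s p)) *\<^sub>R p + (s p / (1 + s p)) *\<^sub>R q"
        using sp unfolding f_def q_def
        by (simp add: scaleR_add_right scaleR_sum_right divide_inverse, intro sum.cong refl, simp add: field_simps)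
      moreover have "(1 / (1 + s p)) + (s p / (1 + s p)) = 1" using sp
        by (simp add: field_simps)
      ultimately show ?thesis
        using convexD[OF K(2) pK qK, of "1/(1+s p)" "s p / (1 + s p)"] sp by simp
    qed
  qed
  obtain p where pK: "p \<in> K" and fp: "f p = p"
    using brouwer[OF K contf fK] by blast
  have eq: "(\<Sum>i\<in>F. m i p *\<^sub>R y i) = s p *\<^sub>R p"
  proof -
    have "(1 + s p) *\<^sub>R f p = p + (\<Sum>i\<in>F. m i p *\<^sub>R y i)"
      unfolding f_def using s0[of p] by simp
    then show ?thesis using fp by (simp add: algebra_simps)
  qed
  have sp0: "s p = 0"
  proof (rule ccontr)
    assume "s p \<noteq> 0"
    then have sp: "s p > 0" using s0 less_eq_real_def by auto
    have "\<not> (\<forall>i\<in>F. m i p = 0)"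
    proof
      assume "\<forall>i\<in>F. m i p = 0"
      then have "s p = 0" unfolding s_def by simp
      then show False using sp by simp
    qed
    then obtain k where k0: "k \<in> F" "m k p \<noteq> 0" by blast
    then have k: "k \<in> F" "m k p > 0" using m0[of k p] by auto
    have mg: "m i p * g i p = m i p * m i p" for i
      by (simp add: m_def max_def)
    have pos: "(\<Sum>i\<in>F. m i p * g i p) > 0"
    proof -
      have "(\<Sum>i\<in>F. m i p * g i p) = (\<Sum>i\<in>F. m i p * m i p)" by (simp add: mg)
      also have "\<dots> \<ge> m k p * m k p"
        using k F(1) by (intro member_le_sum) auto
      finally show ?thesis using k by (smt (verit) mult_pos_pos)
    qed
    have split: "(\<Sum>i\<in>F. m i p * g i p) = (\<Sum>i\<in>F. m i p * inner (p - x) (p - y i))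
        + c * (\<Sum>i\<in>F. m i p * inner (v i) (p - y i))"
      unfolding g_def
      by (simp add: sum.distrib[symmetric] sum_distrib_left inner_add_left inner_diff_left algebra_simps)
    have t1: "(\<Sum>i\<in>F. m i p * inner (p - x) (p - y i)) = 0"
    proof -
      have "(\<Sum>i\<in>F. m i p * inner (p - x) (p - y i)) = inner (p - x) (\<Sum>i\<in>F. m i p *\<^sub>R (p - y i))"
        by (simp add: inner_sum_right)
      also have "(\<Sum>i\<in>F. m i p *\<^sub>R (p - y i)) = s p *\<^sub>R p - (\<Sum>i\<in>F. m i p *\<^sub>R y i)"
        by (simp add: scaleR_diff_right sum_subtractf s_def scaleR_sum_left)
      finally show ?thesis using eq by simp
    qed
    have t2: "s p * (\<Sum>i\<in>F. m i p * inner (v i) (p - y i)) \<le> 0"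
    proof -
      have "s p * (\<Sum>i\<in>F. m i p * inner (v i) (p - y i))
          = (\<Sum>i\<in>F. m i p * inner (v i) (s p *\<^sub>R p - s p *\<^sub>R y i))"
        by (simp add: sum_distrib_left inner_diff_right algebra_simps)
      also have "\<dots> = (\<Sum>i\<in>F. m i p * inner (v i) ((\<Sum>j\<in>F. m j p *\<^sub>R y j) - s p *\<^sub>R y i))"
        by (simp only: eq)
      also have "\<dots> = (\<Sum>i\<in>F. m i p * inner (v i) (\<Sum>j\<in>F. m j p *\<^sub>R (y j - y i)))"
        by (simp add: scaleR_diff_right sum_subtractf s_def scaleR_sum_left)
      also have "\<dots> = (\<Sum>i\<in>F. \<Sum>j\<in>F. m i p * m j p * inner (v i) (y j - y i))"
        by (simp add: inner_sum_right sum_distrib_left mult.assoc)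
      also have "\<dots> \<le> 0"
        by (rule sym_double_sum_le[OF F(1) m0 mono])
      finally show ?thesis .
    qed
    have "s p * (\<Sum>i\<in>F. m i p * g i p) \<le> 0"
    proof -
      have "s p * (\<Sum>i\<in>F. m i p * g i p) = c * (s p * (\<Sum>i\<in>F. m i p * inner (v i) (p - y i)))"
        by (simp only: split t1) (simp add: algebra_simps)
      also have "\<dots> \<le> 0" using t2 c by (simp add: mult_nonneg_nonpos)
      finally show ?thesis .
    qed
    moreover have "s p * (\<Sum>i\<in>F. m i p * g i p) > 0" using sp pos by simp
    ultimately show False by simp
  qed
  then have "\<forall>i\<in>F. m i p = 0" using F m0 unfolding s_def by (simp add: sum_nonneg_eq_0_iff)
  then show ?thesis unfolding m_def g_def by (metis max.cobounded2)
qed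


lemma inner_shift_ball:
  fixes p a b :: "'a::real_inner"
  shows "inner (p + a) (p - b) = (norm (p + (a - b) /\<^sub>R 2))\<^sup>2 - (norm ((a + b) /\<^sub>R 2))\<^sup>2"
  by (simp add: power2_norm_eq_inner inner_add_left inner_add_right inner_diff_left inner_diff_right
      inner_commute algebra_simps)

lemma minty:
  fixes A :: "'a::euclidean_space \<Rightarrow> 'a set"
  assumes mm: "maximal_monotone A" and c: "c > 0"
  shows "\<exists>p. \<exists>u\<in>A p. x - p = c *\<^sub>R u"
proof -
  have mono: "monotone_op A" using mm by (simp add: maximal_monotone_def)
  have maxi: "\<And>A'. monotone_op A' \<Longrightarrow> (\<forall>x. A x \<subseteq> A' x) \<Longrightarrow> A' = A"
    using mm by (simp add: maximal_monotone_def)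
  define G where "G = {(y, v). v \<in> A y}"
  have Gne: "G \<noteq> {}"
  proof
    assume "G = {}"
    then have Ae: "\<And>y. A y = {}" by (auto simp: G_def)
    have "monotone_op (\<lambda>y::'a. {0::'a})" by (simp add: monotone_op_def)
    then have "(\<lambda>y::'a. {0::'a}) = A" by (rule maxi) (simp add: Ae)
    then show False using Ae by (metis empty_iff insertI1)
  qed
  then obtain e0 where e0: "e0 \<in> G" by blast
  define S where "S e = {p. inner (p + c *\<^sub>R snd e - x) (p - fst e) \<le> 0}" for e
  have Sclosed: "closed (S e)" for e
    unfolding S_def by (intro closed_Collect_le continuous_intros)
  have Sbounded: "bounded (S e)" for e
  proof -
    define a where "a = c *\<^sub>R snd e - x"
    define b where "b = fst e"
    have "S e \<subseteq> cball (- ((a - b) /\<^sub>R 2)) (norm ((a + b) /\<^sub>R 2))"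
    proof
      fix p assume "p \<in> S e"
      then have "inner (p + a) (p - b) \<le> 0" by (simp add: S_def a_def b_def algebra_simps)
      then have "(norm (p + (a - b) /\<^sub>R 2))\<^sup>2 \<le> (norm ((a + b) /\<^sub>R 2))\<^sup>2"
        by (simp add: inner_shift_ball)
      then have "norm (p + (a - b) /\<^sub>R 2) \<le> norm ((a + b) /\<^sub>R 2)"
        using power2_le_imp_le norm_ge_zero by blast
      then show "p \<in> cball (- ((a - b) /\<^sub>R 2)) (norm ((a + b) /\<^sub>R 2))"
        unfolding mem_cball dist_norm norm_minus_commute[of "- _"] diff_minus_eq_add by simp
    qed
    then show ?thesis using bounded_cball bounded_subset by blast
  qed
  have "\<Inter> (S ` G) \<noteq> {}"
  proof (rule closed_fip_Heine_Borel)
    show "S e0 \<in> S ` G" using e0 by blast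
    show "bounded (S e0)" by (rule Sbounded)
    show "\<And>T. T \<in> S ` G \<Longrightarrow> closed T" using Sclosed by blast
    fix F' assume F': "finite F'" "F' \<subseteq> S ` G"
    then obtain F where F: "F \<subseteq> G" "finite F" "F' = S ` F"
      by (meson finite_subset_image)
    show "\<Inter> F' \<noteq> {}"
    proof (cases "F = {}")
      case True then show ?thesis using F by simp
    next
      case False
      have "\<exists>p. \<forall>i\<in>F. inner (p + c *\<^sub>R snd i - x) (p - fst i) \<le> 0"
      proof (rule minty_finite[OF F(2) False c])
        fix i j assume "i \<in> F" "j \<in> F"
        then have "snd i \<in> A (fst i)" "snd j \<in> A (fst j)" using F(1) by (auto simp: G_def)
        then show "inner (snd i - snd j) (fst i - fst j) \<ge> 0"
          using mono by (simp add: monotone_op_def)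
      qed
      then obtain p where "\<forall>i\<in>F. inner (p + c *\<^sub>R snd i - x) (p - fst i) \<le> 0" by blast
      then have "p \<in> \<Inter> F'" using F by (auto simp: S_def)
      then show ?thesis by blast
    qed
  qed
  then obtain p where p: "\<And>e. e \<in> G \<Longrightarrow> p \<in> S e" by blast
  define u where "u = (1 / c) *\<^sub>R (x - p)"
  have xpu: "x - p = c *\<^sub>R u" using c by (simp add: u_def)
  have key: "inner (u - v) (p - y) \<ge> 0" if "v \<in> A y" for y v
  proof -
    have "(y, v) \<in> G" using that by (simp add: G_def)
    then have "inner (p + c *\<^sub>R v - x) (p - y) \<le> 0" using p by (force simp: S_def)
    moreover have "p + c *\<^sub>R v - x = - (c *\<^sub>R (u - v))" using xpu by (simp add: algebra_simps)
    ultimately have "c * inner (u - v) (p - y) \<ge> 0" by simp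
    then show ?thesis using c by (simp add: zero_le_mult_iff)
  qed
  define A' where "A' y = (if y = p then insert u (A p) else A y)" for y
  have "monotone_op A'"
    unfolding monotone_op_def
  proof (intro allI impI)
    fix x1 y1 u1 v1 assume h: "u1 \<in> A' x1" "v1 \<in> A' y1"
    show "inner (u1 - v1) (x1 - y1) \<ge> 0"
    proof (cases "x1 = p \<and> u1 = u")
      case True
      show ?thesis
      proof (cases "y1 = p \<and> v1 = u")
        case True
        then show ?thesis using \<open>x1 = p \<and> u1 = u\<close> by simp
      next
        case False
        then have "v1 \<in> A y1" using h(2) by (auto simp: A'_def split: if_splits)
        then show ?thesis using key True by simp
      qed
    next
      case False
      then have u1A: "u1 \<in> A x1" using h(1) by (auto simp: A'_def split: if_splits)
      show ?thesis
      proof (cases "y1 = p \<and> v1 = u")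
        case True
        have "inner (u - u1) (p - x1) \<ge> 0" using key u1A by simp
        then show ?thesis using True by (simp add: inner_diff_left inner_diff_right algebra_simps)
      next
        case False
        then have "v1 \<in> A y1" using h(2) by (auto simp: A'_def split: if_splits)
        then show ?thesis using u1A mono by (simp add: monotone_op_def)
      qed
    qed
  qed
  moreover have "\<forall>y. A y \<subseteq> A' y" by (auto simp: A'_def)
  ultimately have "A' = A" by (rule maxi)
  then have "u \<in> A p" by (metis A'_def insertI1)
  then show ?thesis using xpu by blast
qed

lemma resolvent_unique:
  fixes A :: "'a::real_inner \<Rightarrow> 'a set"
  assumes mono: "monotone_op A" and c: "c > 0"
    and h1: "u1 \<in> A p1" "x - p1 = c *\<^sub>R u1" and h2: "u2 \<in> A p2" "x - p2 = c *\<^sub>R u2"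
  shows "p1 = p2"
proof -
  have "inner (u1 - u2) (p1 - p2) \<ge> 0" using mono h1 h2 by (simp add: monotone_op_def)
  then have "c * inner (u1 - u2) (p1 - p2) \<ge> 0" using c by simp
  moreover have "c *\<^sub>R (u1 - u2) = - (p1 - p2)" using h1 h2 by (simp add: algebra_simps)
  ultimately have "inner (p1 - p2) (p1 - p2) \<le> 0"
    by (metis inner_scaleR_left neg_0_le_iff_le inner_minus_left)
  then have "inner (p1 - p2) (p1 - p2) = 0" using inner_ge_zero[of "p1 - p2"] by linarith
  then show ?thesis by simp
qed

lemma resolvent_prop:
  fixes A :: "'a::euclidean_space \<Rightarrow> 'a set"
  assumes mm: "maximal_monotone A" and c: "c > 0"
  shows "\<exists>u\<in>A (resolvent (scale_op c A) x). x - resolvent (scale_op c A) x = c *\<^sub>R u"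
proof -
  have mono: "monotone_op A" using mm by (simp add: maximal_monotone_def)
  have eq: "(x - p \<in> scale_op c A p) \<longleftrightarrow> (\<exists>u\<in>A p. x - p = c *\<^sub>R u)" for p
    by (auto simp: scale_op_def)
  have "\<exists>!p. x - p \<in> scale_op c A p"
    unfolding eq using minty[OF mm c, of x] resolvent_unique[OF mono c] by blast
  then have "x - resolvent (scale_op c A) x \<in> scale_op c A (resolvent (scale_op c A) x)"
    unfolding resolvent_def by (rule theI')
  then show ?thesis unfolding eq .
qed

lemma resolvent_nonexp:
  fixes A :: "'a::euclidean_space \<Rightarrow> 'a set"
  assumes mm: "maximal_monotone A" and c: "c > 0"
  shows "norm (resolvent (scale_op c A) x1 - resolvent (scale_op c A) x2) \<le> norm (x1 - x2)"
proof -
  have mono: "monotone_op A" using mm by (simp add: maximal_monotone_def)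
  define p1 where "p1 = resolvent (scale_op c A) x1"
  define p2 where "p2 = resolvent (scale_op c A) x2"
  obtain u1 where u1: "u1 \<in> A p1" "x1 - p1 = c *\<^sub>R u1" using resolvent_prop[OF mm c, of x1] p1_def by blast
  obtain u2 where u2: "u2 \<in> A p2" "x2 - p2 = c *\<^sub>R u2" using resolvent_prop[OF mm c, of x2] p2_def by blast
  have "inner (u1 - u2) (p1 - p2) \<ge> 0" using mono u1 u2 by (simp add: monotone_op_def)
  then have "inner (c *\<^sub>R (u1 - u2)) (p1 - p2) \<ge> 0" using c by simp
  moreover have "c *\<^sub>R (u1 - u2) = (x1 - x2) - (p1 - p2)" using u1 u2 by (simp add: algebra_simps)
  ultimately have "inner (p1 - p2) (p1 - p2) \<le> inner (x1 - x2) (p1 - p2)"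
    by (simp add: inner_diff_left)
  also have "\<dots> \<le> norm (x1 - x2) * norm (p1 - p2)" by (rule norm_cauchy_schwarz)
  finally have "norm (p1 - p2) * norm (p1 - p2) \<le> norm (x1 - x2) * norm (p1 - p2)"
    by (simp add: power2_norm_eq_inner[symmetric] power2_eq_square)
  then show ?thesis unfolding p1_def[symmetric] p2_def[symmetric]
    by (cases "norm (p1 - p2) = 0") (auto simp: mult_le_cancel_right)
qed

lemma resolvent_continuous:
  fixes A :: "'a::euclidean_space \<Rightarrow> 'a set"
  assumes mm: "maximal_monotone A" and c: "c > 0"
  shows "continuous_on UNIV (resolvent (scale_op c A))"
proof -
  have "1-lipschitz_on UNIV (resolvent (scale_op c A))"
    by (rule lipschitz_onI) (use resolvent_nonexp[OF mm c] in \<open>auto simp: dist_norm\<close>)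
  then show ?thesis by (rule lipschitz_on_continuous_on)
qed


lemma real_ineq_step:
  fixes t mu L X Y Q G nd ne ed :: real
  assumes "t*X \<le> ed" "t*mu*nd \<le> t*Y" "t^2*Q \<le> t^2*(2*G + 2*L^2*ne)"
    "t*mu*(nd+2*ed+ne) \<le> t*mu*(2*nd + 2*ne)" "ne*(2*t*mu + 2*t^2*L^2) \<le> ne"
  shows "nd + 2*t*X - 2*t*Y + t^2*Q \<le> (1-t*mu)*(nd+2*ed+ne) + 2*t^2*G"
  using assms by (simp add: algebra_simps)

lemma sq_sum_le:
  fixes a b :: real
  shows "(a + b)\<^sup>2 \<le> 2 * a\<^sup>2 + 2 * b\<^sup>2"
proof -
  have "0 \<le> (a - b)\<^sup>2" by simp
  then show ?thesis by (simp add: power2_eq_square algebra_simps)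
qed

lemma norm_add_sq_scale:
  fixes d w :: "'a::real_inner"
  shows "(norm (d + t *\<^sub>R w))\<^sup>2 = (norm d)\<^sup>2 + 2 * t * inner w d + t\<^sup>2 * (norm w)\<^sup>2"
proof -
  have "inner (d + t *\<^sub>R w) (d + t *\<^sub>R w) = inner d d + 2 * t * inner w d + t\<^sup>2 * inner w w"
    by (simp add: inner_add_left inner_add_right inner_commute power2_eq_square algebra_simps)
  then show ?thesis by (metis power2_norm_eq_inner)
qed

locale fbf_setting =
  fixes A :: "'a::euclidean_space \<Rightarrow> 'a set"
    and B :: "'a \<Rightarrow> 'a"
    and P :: "'w measure"
    and Bt :: "'a \<Rightarrow> 'w \<Rightarrow> 'a"
    and L \<mu> \<sigma> :: real
    and zs :: 'a
  assumes A_mm: "maximal_monotone A"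
    and B_lip: "L-lipschitz_on UNIV B"
    and mu_pos: "\<mu> > 0"
    and B_sm: "strongly_monotone \<mu> B"
    and zs_zero: "0 \<in> (\<lambda>u. u + B zs) ` A zs"
    and P_prob: "prob_space P"
    and Bt_meas: "(\<lambda>(x, w). Bt x w) \<in> borel_measurable (borel \<Otimes>\<^sub>M P)"
    and Bt_int: "\<And>x. integrable P (Bt x)"
    and Bt_unbiased: "\<And>x. (\<integral>w. Bt x w \<partial>P) = B x"
    and Bt_var: "\<And>x. (\<integral>\<^sup>+w. ennreal ((norm (Bt x w - B x))\<^sup>2) \<partial>P) \<le> ennreal (\<sigma>\<^sup>2)"
begin

interpretation P: prob_space P by (rule P_prob)

lemma B_lipD: "norm (B x - B y) \<le> L * norm (x - y)"
  using lipschitz_onD[OF B_lip, of x y] by (simp add: dist_norm)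

lemma L_nonneg: "L \<ge> 0" using B_lip by (simp add: lipschitz_on_def)

lemma mu_le_L: "\<mu> \<le> L"
proof -
  obtain e :: 'a where e: "e \<in> Basis" using nonempty_Basis by blast
  then have ne: "norm e = 1" by simp
  have "\<mu> * (norm (e - 0))\<^sup>2 \<le> inner (B e - B 0) (e - 0)"
    using B_sm unfolding strongly_monotone_def by blast
  also have "\<dots> \<le> norm (B e - B 0) * norm (e - 0)" by (rule norm_cauchy_schwarz)
  also have "\<dots> \<le> L * norm (e - 0) * norm (e - 0)"
    by (intro mult_right_mono B_lipD) simp
  finally show ?thesis using ne by simp
qed

lemma L_pos: "L > 0" using mu_le_L mu_pos by simp

lemma det_step:
  assumes tau: "\<tau> > 0" "2 * \<tau> * \<mu> + 2 * \<tau>\<^sup>2 * L\<^sup>2 \<le> 1"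
  shows "(norm (resolvent (scale_op \<tau> A) (z - \<tau> *\<^sub>R g0) + \<tau> *\<^sub>R g0
            - \<tau> *\<^sub>R B (resolvent (scale_op \<tau> A) (z - \<tau> *\<^sub>R g0)) - zs))\<^sup>2
         \<le> (1 - \<tau> * \<mu>) * (norm (z - zs))\<^sup>2 + 2 * \<tau>\<^sup>2 * (norm (g0 - B z))\<^sup>2"
proof -
  define zh where "zh = resolvent (scale_op \<tau> A) (z - \<tau> *\<^sub>R g0)"
  obtain u where u: "u \<in> A zh" "z - \<tau> *\<^sub>R g0 - zh = \<tau> *\<^sub>R u"
    using resolvent_prop[OF A_mm tau(1)] unfolding zh_def by blast
  obtain u0 where u0: "u0 \<in> A zs" "u0 + B zs = 0" using zs_zero by auto
  have mono: "inner (u - u0) (zh - zs) \<ge> 0"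
    using A_mm u u0 by (simp add: maximal_monotone_def monotone_op_def)
  define d where "d = zh - zs"
  define e where "e = z - zh"
  define X where "X = inner (g0 - B zs) d"
  define Y where "Y = inner (B zh - B zs) d"
  define Q where "Q = (norm (g0 - B zh))\<^sup>2"
  define G where "G = (norm (g0 - B z))\<^sup>2"
  define nd where "nd = (norm d)\<^sup>2"
  define ne where "ne = (norm e)\<^sup>2"
  define ed where "ed = inner e d"
  have h1: "\<tau> * X \<le> ed"
  proof -
    have u0': "u0 = - B zs" using u0(2) by (simp add: eq_neg_iff_add_eq_0)
    have "\<tau> *\<^sub>R (u - u0) = \<tau> *\<^sub>R u - \<tau> *\<^sub>R u0" by (simp add: scaleR_diff_right)
    also have "\<dots> = e - \<tau> *\<^sub>R g0 + \<tau> *\<^sub>R B zs"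
      unfolding u(2)[symmetric] u0' e_def by (simp add: algebra_simps)
    finally have "\<tau> *\<^sub>R (u - u0) = e - \<tau> *\<^sub>R g0 + \<tau> *\<^sub>R B zs" .
    moreover have "inner (\<tau> *\<^sub>R (u - u0)) d \<ge> 0" using mono tau d_def by simp
    ultimately have "inner (e - \<tau> *\<^sub>R g0 + \<tau> *\<^sub>R B zs) d \<ge> 0" by simp
    then show ?thesis unfolding X_def ed_def
      by (simp add: inner_diff_left inner_add_left algebra_simps)
  qed
  have h2: "\<tau> * \<mu> * nd \<le> \<tau> * Y"
  proof -
    have "\<mu> * nd \<le> Y" using B_sm unfolding strongly_monotone_def Y_def nd_def d_def by blast
    then show ?thesis using tau by (simp add: mult.assoc)
  qed
  have h3: "\<tau>\<^sup>2 * Q \<le> \<tau>\<^sup>2 * (2 * G + 2 * L\<^sup>2 * ne)"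
  proof -
    have "norm (B z - B zh) \<le> L * norm e" using B_lipD unfolding e_def by blast
    then have b: "(norm (B z - B zh))\<^sup>2 \<le> L\<^sup>2 * ne"
      unfolding ne_def by (metis norm_ge_zero power_mono power_mult_distrib)
    have "norm (g0 - B zh) \<le> norm (g0 - B z) + norm (B z - B zh)"
      by (metis diff_add_cancel norm_triangle_ineq add_diff_eq)
    then have "Q \<le> (norm (g0 - B z) + norm (B z - B zh))\<^sup>2"
      unfolding Q_def by (rule power_mono) simp_all
    also have "\<dots> \<le> 2 * G + 2 * (norm (B z - B zh))\<^sup>2"
      unfolding G_def by (rule sq_sum_le)
    finally have "Q \<le> 2 * G + 2 * L\<^sup>2 * ne" using b by linarith
    then show ?thesis by (simp add: mult_left_mono)
  qed
  have zz: "(norm (z - zs))\<^sup>2 = nd + 2 * ed + ne"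
  proof -
    have "z - zs = d + e" by (simp add: d_def e_def)
    then show ?thesis unfolding nd_def ne_def ed_def
      by (simp add: power2_norm_eq_inner inner_add_left inner_add_right inner_commute)
  qed
  have h4: "\<tau> * \<mu> * (nd + 2 * ed + ne) \<le> \<tau> * \<mu> * (2 * nd + 2 * ne)"
  proof -
    have "0 \<le> (norm (d - e))\<^sup>2" by simp
    then have "2 * ed \<le> nd + ne" unfolding nd_def ne_def ed_def
      by (simp add: power2_norm_eq_inner inner_diff_left inner_diff_right inner_commute)
    then show ?thesis using tau mu_pos by (intro mult_left_mono) auto
  qed
  have h5: "ne * (2 * \<tau> * \<mu> + 2 * \<tau>\<^sup>2 * L\<^sup>2) \<le> ne"
    using tau unfolding ne_def by (simp add: mult_left_le)
  have lhs: "(norm (zh + \<tau> *\<^sub>R g0 - \<tau> *\<^sub>R B zh - zs))\<^sup>2 = nd + 2 * \<tau> * X - 2 * \<tau> * Y + \<tau>\<^sup>2 * Q"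
  proof -
    have eq1: "zh + \<tau> *\<^sub>R g0 - \<tau> *\<^sub>R B zh - zs = d + \<tau> *\<^sub>R (g0 - B zh)"
      by (simp add: d_def algebra_simps)
    have eq2: "inner (g0 - B zh) d = X - Y"
      by (simp add: X_def Y_def inner_diff_left)
    show ?thesis unfolding nd_def Q_def eq1 norm_add_sq_scale eq2 by (simp add: algebra_simps)
  qed
  show ?thesis
    unfolding zh_def[symmetric] lhs zz G_def[symmetric]
    by (rule real_ineq_step[OF h1 h2 h3 h4 h5])
qed

end

context fbf_setting begin

interpretation P: prob_space P by (rule P_prob)

definition "tau t = fbf_step t \<mu> L"
definition "half t z g = resolvent (scale_op (tau t) A) (z - tau t *\<^sub>R g)"
definition "step t z w0 w1 = half t z (Bt z w0) + tau t *\<^sub>R Bt z w0 - tau t *\<^sub>R Bt (half t z (Bt z w0)) w1"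

lemma fbf_Suc: "fbf A Bt \<mu> L z0 \<xi> (Suc t) = step t (fbf A Bt \<mu> L z0 \<xi> t) (\<xi> (2 * t)) (\<xi> (2 * t + 1))"
  by (simp add: Let_def step_def half_def tau_def)

lemma tau_pos: "tau t > 0"
  using mu_pos L_pos unfolding tau_def fbf_step_def by (simp add: add_pos_pos)

lemma tau_L: "tau t * L \<le> 1 / 3"
proof -
  have d: "(real t + 1) * \<mu> + 6 * L > 0" using mu_pos L_pos by (simp add: add_pos_pos)
  have "tau t * L = 2 * L / ((real t + 1) * \<mu> + 6 * L)" by (simp add: tau_def fbf_step_def)
  also have "\<dots> \<le> 1 / 3" using d mu_pos by (simp add: divide_le_eq)
  finally show ?thesis .
qed

lemma tau_mu: "tau t * \<mu> \<le> 1 / 3"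
  using tau_L mu_le_L tau_pos by (smt (verit) mult_left_mono)

lemma tau_cond: "2 * tau t * \<mu> + 2 * (tau t)\<^sup>2 * L\<^sup>2 \<le> 1"
proof -
  have "(tau t * L)\<^sup>2 \<le> (1/3)\<^sup>2"
  proof (rule power_mono)
    show "0 \<le> tau t * L" using tau_pos[of t] L_pos by simp
  qed (use tau_L in auto)
  then have "(tau t)\<^sup>2 * L\<^sup>2 \<le> 1/9" by (simp add: power_mult_distrib power2_eq_square mult_ac)
  then show ?thesis using tau_mu[of t] by linarith
qed

lemma Bt_meas_x: "Bt x \<in> borel_measurable P"
  using Bt_int by (rule borel_measurable_integrable)

lemma inner_var:
  "(\<integral>\<^sup>+w. ennreal ((norm (c0 - \<tau> *\<^sub>R Bt x w))\<^sup>2) \<partial>P) \<le> ennreal ((norm (c0 - \<tau> *\<^sub>R B x))\<^sup>2 + \<tau>\<^sup>2 * \<sigma>\<^sup>2)"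
proof -
  define a where "a = c0 - \<tau> *\<^sub>R B x"
  define X where "X w = Bt x w - B x" for w
  have Xm: "X \<in> borel_measurable P" unfolding X_def using Bt_meas_x by measurable
  have Xi: "integrable P X" unfolding X_def using Bt_int by simp
  have IX: "integral\<^sup>L P X = 0" unfolding X_def using Bt_int Bt_unbiased
    by (simp add: P.prob_space)
  have nnX: "(\<integral>\<^sup>+w. ennreal ((norm (X w))\<^sup>2) \<partial>P) \<le> ennreal (\<sigma>\<^sup>2)"
    unfolding X_def by (rule Bt_var)
  have X2i: "integrable P (\<lambda>w. (norm (X w))\<^sup>2)"
  proof (subst integrable_iff_bounded, intro conjI)
    show "(\<lambda>w. (norm (X w))\<^sup>2) \<in> borel_measurable P" using Xm by measurable
    have "(\<integral>\<^sup>+w. ennreal (norm ((norm (X w))\<^sup>2)) \<partial>P) = (\<integral>\<^sup>+w. ennreal ((norm (X w))\<^sup>2) \<partial>P)"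
      by simp
    also have "\<dots> < \<infinity>" using nnX by (simp add: le_less_trans)
    finally show "(\<integral>\<^sup>+w. ennreal (norm ((norm (X w))\<^sup>2)) \<partial>P) < \<infinity>" .
  qed
  have IX2: "(\<integral>w. (norm (X w))\<^sup>2 \<partial>P) \<le> \<sigma>\<^sup>2"
  proof -
    have "ennreal (\<integral>w. (norm (X w))\<^sup>2 \<partial>P) = (\<integral>\<^sup>+w. ennreal ((norm (X w))\<^sup>2) \<partial>P)"
      by (rule nn_integral_eq_integral[symmetric]) (use X2i in auto)
    then have "ennreal (\<integral>w. (norm (X w))\<^sup>2 \<partial>P) \<le> ennreal (\<sigma>\<^sup>2)" using nnX by simp
    then show ?thesis by (simp add: ennreal_le_iff)
  qed
  have feq: "(norm (c0 - \<tau> *\<^sub>R Bt x w))\<^sup>2 = (norm a)\<^sup>2 + 2 * (- \<tau>) * inner (X w) a + (- \<tau>)\<^sup>2 * (norm (X w))\<^sup>2" for w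
  proof -
    have "c0 - \<tau> *\<^sub>R Bt x w = a + (- \<tau>) *\<^sub>R X w" by (simp add: a_def X_def algebra_simps)
    then show ?thesis by (simp only: norm_add_sq_scale)
  qed
  have fi: "integrable P (\<lambda>w. (norm a)\<^sup>2 + 2 * (- \<tau>) * inner (X w) a + (- \<tau>)\<^sup>2 * (norm (X w))\<^sup>2)"
  proof -
    have i1: "integrable P (\<lambda>w. inner (X w) a)" using Xi by simp
    have c: "integrable P (\<lambda>w. (norm a)\<^sup>2)" by simp
    have t2: "integrable P (\<lambda>w. 2 * - \<tau> * inner (X w) a)" using i1 by (rule integrable_mult_right)
    have t3: "integrable P (\<lambda>w. (- \<tau>)\<^sup>2 * (norm (X w))\<^sup>2)" using X2i by (rule integrable_mult_right)
    show ?thesis using Bochner_Integration.integrable_add[OF Bochner_Integration.integrable_add[OF c t2] t3] by simp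
  qed
  have "(\<integral>\<^sup>+w. ennreal ((norm (c0 - \<tau> *\<^sub>R Bt x w))\<^sup>2) \<partial>P)
      = (\<integral>\<^sup>+w. ennreal ((norm a)\<^sup>2 + 2 * (- \<tau>) * inner (X w) a + (- \<tau>)\<^sup>2 * (norm (X w))\<^sup>2) \<partial>P)"
    by (simp only: feq)
  also have "\<dots> = ennreal (\<integral>w. (norm a)\<^sup>2 + 2 * (- \<tau>) * inner (X w) a + (- \<tau>)\<^sup>2 * (norm (X w))\<^sup>2 \<partial>P)"
    by (rule nn_integral_eq_integral[OF fi], intro AE_I2, simp only: feq[symmetric] zero_le_power2)
  also have "(\<integral>w. (norm a)\<^sup>2 + 2 * (- \<tau>) * inner (X w) a + (- \<tau>)\<^sup>2 * (norm (X w))\<^sup>2 \<partial>P)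
      = (norm a)\<^sup>2 + 2 * (- \<tau>) * inner (integral\<^sup>L P X) a + \<tau>\<^sup>2 * (\<integral>w. (norm (X w))\<^sup>2 \<partial>P)"
    using Xi X2i by (simp add: P.prob_space)
  also have "\<dots> \<le> (norm a)\<^sup>2 + \<tau>\<^sup>2 * \<sigma>\<^sup>2"
    using IX IX2 by (simp add: mult_left_mono)
  finally show ?thesis unfolding a_def by (simp add: ennreal_leI)
qed

end

context fbf_setting begin

interpretation P: prob_space P by (rule P_prob)

lemma Bt_comp_meas:
  assumes f: "f \<in> borel_measurable M" and w: "w \<in> measurable M P"
  shows "(\<lambda>x. Bt (f x) (w x)) \<in> borel_measurable M"
  using measurable_Pair_compose_split[of Bt borel P borel, OF _ f w] Bt_meas by simp

lemma half_meas:
  assumes f: "f \<in> borel_measurable M" and g: "g \<in> borel_measurable M"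
  shows "(\<lambda>x. half t (f x) (g x)) \<in> borel_measurable M"
  unfolding half_def
  by (rule borel_measurable_continuous_on[OF resolvent_continuous[OF A_mm tau_pos]]) (use f g in measurable)

lemma step_meas:
  assumes f: "f \<in> borel_measurable M" and w0: "w0 \<in> measurable M P" and w1: "w1 \<in> measurable M P"
  shows "(\<lambda>x. step t (f x) (w0 x) (w1 x)) \<in> borel_measurable M"
proof -
  have g: "(\<lambda>x. Bt (f x) (w0 x)) \<in> borel_measurable M" by (rule Bt_comp_meas[OF f w0])
  have h: "(\<lambda>x. half t (f x) (Bt (f x) (w0 x))) \<in> borel_measurable M" by (rule half_meas[OF f g])
  have k: "(\<lambda>x. Bt (half t (f x) (Bt (f x) (w0 x))) (w1 x)) \<in> borel_measurable M"
    by (rule Bt_comp_meas[OF h w1])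
  show ?thesis unfolding step_def using g h k by measurable
qed

lemma step_bound:
  "(\<integral>\<^sup>+w0. (\<integral>\<^sup>+w1. ennreal ((norm (step t z w0 w1 - zs))\<^sup>2) \<partial>P) \<partial>P)
     \<le> ennreal ((1 - tau t * \<mu>) * (norm (z - zs))\<^sup>2 + 3 * (tau t)\<^sup>2 * \<sigma>\<^sup>2)"
proof -
  define \<tau> where "\<tau> = tau t"
  define K where "K = (1 - \<tau> * \<mu>) * (norm (z - zs))\<^sup>2 + \<tau>\<^sup>2 * \<sigma>\<^sup>2"
  have K0: "K \<ge> 0" unfolding K_def \<tau>_def using tau_mu[of t] by simp
  have inner: "(\<integral>\<^sup>+w1. ennreal ((norm (step t z w0 w1 - zs))\<^sup>2) \<partial>P)
      \<le> ennreal (K + 2 * \<tau>\<^sup>2 * (norm (Bt z w0 - B z))\<^sup>2)" for w0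
  proof -
    define g where "g = Bt z w0"
    define zh where "zh = half t z g"
    have eq: "step t z w0 w1 - zs = (zh + \<tau> *\<^sub>R g - zs) - \<tau> *\<^sub>R Bt zh w1" for w1
      by (simp add: step_def zh_def g_def \<tau>_def algebra_simps)
    have "(\<integral>\<^sup>+w1. ennreal ((norm (step t z w0 w1 - zs))\<^sup>2) \<partial>P)
        \<le> ennreal ((norm ((zh + \<tau> *\<^sub>R g - zs) - \<tau> *\<^sub>R B zh))\<^sup>2 + \<tau>\<^sup>2 * \<sigma>\<^sup>2)"
      unfolding eq by (rule inner_var)
    also have "(norm ((zh + \<tau> *\<^sub>R g - zs) - \<tau> *\<^sub>R B zh))\<^sup>2
        \<le> (1 - \<tau> * \<mu>) * (norm (z - zs))\<^sup>2 + 2 * \<tau>\<^sup>2 * (norm (g - B z))\<^sup>2"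
    proof -
      have e: "(zh + \<tau> *\<^sub>R g - zs) - \<tau> *\<^sub>R B zh = zh + \<tau> *\<^sub>R g - \<tau> *\<^sub>R B zh - zs"
        by (simp add: algebra_simps)
      show ?thesis unfolding e
        using det_step[OF tau_pos[of t] tau_cond[of t], of z g]
        unfolding zh_def half_def \<tau>_def .
    qed
    finally show ?thesis unfolding K_def g_def by (simp add: ennreal_leI algebra_simps)
  qed
  have "(\<integral>\<^sup>+w0. (\<integral>\<^sup>+w1. ennreal ((norm (step t z w0 w1 - zs))\<^sup>2) \<partial>P) \<partial>P)
      \<le> (\<integral>\<^sup>+w0. ennreal (K + 2 * \<tau>\<^sup>2 * (norm (Bt z w0 - B z))\<^sup>2) \<partial>P)"
    by (rule nn_integral_mono) (rule inner)
  also have "\<dots> = (\<integral>\<^sup>+w0. ennreal K + ennreal (2 * \<tau>\<^sup>2) * ennreal ((norm (Bt z w0 - B z))\<^sup>2) \<partial>P)"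
    using K0 by (intro nn_integral_cong) (simp add: ennreal_plus ennreal_mult)
  also have "\<dots> = ennreal K + ennreal (2 * \<tau>\<^sup>2) * (\<integral>\<^sup>+w0. ennreal ((norm (Bt z w0 - B z))\<^sup>2) \<partial>P)"
    using Bt_meas_x[of z]
    by (subst nn_integral_add) (auto simp: nn_integral_cmult P.emeasure_space_1)
  also have "\<dots> \<le> ennreal K + ennreal (2 * \<tau>\<^sup>2) * ennreal (\<sigma>\<^sup>2)"
    by (intro add_left_mono mult_left_mono Bt_var) simp
  also have "\<dots> = ennreal ((1 - tau t * \<mu>) * (norm (z - zs))\<^sup>2 + 3 * (tau t)\<^sup>2 * \<sigma>\<^sup>2)"
    using K0 by (simp add: ennreal_plus[symmetric] ennreal_mult[symmetric] K_def \<tau>_def algebra_simps)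
  finally show ?thesis .
qed

end

context fbf_setting begin

interpretation P: prob_space P by (rule P_prob)

abbreviation "SS \<equiv> (\<Pi>\<^sub>M i\<in>(UNIV::nat set). P)"

lemma seq_space: "sequence_space P"
  unfolding sequence_space_def product_prob_space_def product_prob_space_axioms_def
    product_sigma_finite_def
  using P_prob by (simp add: prob_space_imp_sigma_finite)

interpretation SP: sequence_space P by (rule seq_space)

lemma SS_prob: "prob_space SS" by (rule prob_space_PiM) (simp add: P_prob)

interpretation PS: prob_space SS by (rule SS_prob)
thm SP.P.nn_integral_fst

lemma comp_meas: "(\<lambda>\<xi>. \<xi> i) \<in> measurable SS P"
  by (rule measurable_component_singleton) simp

lemma fbf_meas: "(\<lambda>\<xi>. fbf A Bt \<mu> L z0 \<xi> t) \<in> borel_measurable SS"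
proof (induction t)
  case 0 then show ?case by simp
next
  case (Suc t)
  show ?case unfolding fbf_Suc
    by (rule step_meas[OF Suc comp_meas comp_meas])
qed

lemma fbf_comb: "s \<le> t \<Longrightarrow> fbf A Bt \<mu> L z0 (comb_seq (2 * t) \<omega> \<omega>') s = fbf A Bt \<mu> L z0 \<omega> s"
proof (induction s)
  case 0 then show ?case by simp
next
  case (Suc s)
  then have "s \<le> t" by simp
  have a: "comb_seq (2 * t) \<omega> \<omega>' (2 * s) = \<omega> (2 * s)" using Suc.prems by (simp add: comb_seq_def)
  have b: "comb_seq (2 * t) \<omega> \<omega>' (2 * s + 1) = \<omega> (2 * s + 1)" using Suc.prems by (simp add: comb_seq_def)
  show ?case unfolding fbf_Suc a b Suc.IH[OF \<open>s \<le> t\<close>] ..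
qed

lemma seq2:
  assumes G: "(\<lambda>x. G (fst x) (snd x)) \<in> borel_measurable (P \<Otimes>\<^sub>M P)"
  shows "(\<integral>\<^sup>+\<omega>. G (\<omega> 0) (\<omega> 1) \<partial>SS) = (\<integral>\<^sup>+w0. (\<integral>\<^sup>+w1. G w0 w1 \<partial>P) \<partial>P)"
proof -
  have G2: "(\<lambda>x. G (fst x) (snd x 0)) \<in> borel_measurable (P \<Otimes>\<^sub>M SS)"
    using measurable_compose[OF measurable_Pair[OF measurable_fst measurable_compose[OF measurable_snd comp_meas]] G]
    by simp
  have cn: "(\<lambda>(s, \<omega>). case_nat s \<omega>) \<in> measurable (P \<Otimes>\<^sub>M SS) SS"
  proof (rule measurable_PiM_single')
    fix i :: nat
    show "(\<lambda>\<omega>. (case \<omega> of (s, \<omega>) \<Rightarrow> case_nat s \<omega>) i) \<in> measurable (P \<Otimes>\<^sub>M SS) P"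
      by (cases i) (auto simp: split_beta' intro!: measurable_compose[OF measurable_snd comp_meas] measurable_fst)
  qed (auto simp: space_PiM space_pair_measure PiE_iff split: nat.split)
  have "(\<integral>\<^sup>+\<omega>. G (\<omega> 0) (\<omega> 1) \<partial>SS)
      = (\<integral>\<^sup>+\<omega>. G (\<omega> 0) (\<omega> 1) \<partial>distr (P \<Otimes>\<^sub>M SS) SS (\<lambda>(s, \<omega>). case_nat s \<omega>))"
    by (simp add: SP.PiM_iter)
  also have "\<dots> = (\<integral>\<^sup>+x. G (fst x) (snd x 0) \<partial>(P \<Otimes>\<^sub>M SS))"
  proof (subst nn_integral_distr[OF cn])
    show "(\<lambda>\<omega>. G (\<omega> 0) (\<omega> 1)) \<in> borel_measurable (distr (P \<Otimes>\<^sub>M SS) SS (\<lambda>(s, \<omega>). case_nat s \<omega>))"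
      unfolding measurable_distr_eq1
      using measurable_compose[OF measurable_Pair[OF comp_meas comp_meas] G] by simp
    show "(\<integral>\<^sup>+x. G ((case x of (s, \<omega>) \<Rightarrow> case_nat s \<omega>) 0) ((case x of (s, \<omega>) \<Rightarrow> case_nat s \<omega>) 1) \<partial>(P \<Otimes>\<^sub>M SS))
      = (\<integral>\<^sup>+x. G (fst x) (snd x 0) \<partial>(P \<Otimes>\<^sub>M SS))"
      by (intro nn_integral_cong) (auto split: prod.splits)
  qed
  also have "\<dots> = (\<integral>\<^sup>+s. (\<integral>\<^sup>+\<omega>. G s (\<omega> 0) \<partial>SS) \<partial>P)"
    using SP.P.nn_integral_fst[OF G2] by simp
  also have "\<dots> = (\<integral>\<^sup>+s. (\<integral>\<^sup>+w. G s w \<partial>P) \<partial>P)"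
  proof (intro nn_integral_cong)
    fix s assume s: "s \<in> space P"
    have Gs: "G s \<in> borel_measurable P"
      using measurable_Pair2[OF G s] by simp
    have "(\<integral>\<^sup>+w. G s w \<partial>P) = (\<integral>\<^sup>+w. G s w \<partial>distr SS P (\<lambda>\<omega>. \<omega> 0))"
      by (subst distr_PiM_component[where I=UNIV and M="\<lambda>_. P" and i=0]) (simp_all add: P_prob)
    also have "\<dots> = (\<integral>\<^sup>+\<omega>. G s (\<omega> 0) \<partial>SS)"
      by (rule nn_integral_distr[OF comp_meas]) (simp add: Gs)
    finally show "(\<integral>\<^sup>+\<omega>. G s (\<omega> 0) \<partial>SS) = (\<integral>\<^sup>+w. G s w \<partial>P)" by simp
  qed
  finally show ?thesis .
qed

lemma exp_step:
  "(\<integral>\<^sup>+\<xi>. ennreal ((norm (fbf A Bt \<mu> L z0 \<xi> (Suc t) - zs))\<^sup>2) \<partial>SS)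
   = (\<integral>\<^sup>+\<xi>. (\<integral>\<^sup>+w0. (\<integral>\<^sup>+w1. ennreal ((norm (step t (fbf A Bt \<mu> L z0 \<xi> t) w0 w1 - zs))\<^sup>2) \<partial>P) \<partial>P) \<partial>SS)"
proof -
  define F where "F \<xi> = ennreal ((norm (fbf A Bt \<mu> L z0 \<xi> (Suc t) - zs))\<^sup>2)" for \<xi>
  have Fm: "F \<in> borel_measurable SS" unfolding F_def using fbf_meas[where t="Suc t"] by measurable
  have cm: "(\<lambda>(\<omega>, \<omega>'). comb_seq (2 * t) \<omega> \<omega>') \<in> measurable (SS \<Otimes>\<^sub>M SS) SS"
    by (rule measurable_comb_seq)
  have Fc: "F (comb_seq (2 * t) \<omega> \<omega>') = ennreal ((norm (step t (fbf A Bt \<mu> L z0 \<omega> t) (\<omega>' 0) (\<omega>' 1) - zs))\<^sup>2)"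
    for \<omega> \<omega>'
  proof -
    have a: "comb_seq (2 * t) \<omega> \<omega>' (2 * t) = \<omega>' 0" by (simp add: comb_seq_def)
    have b: "comb_seq (2 * t) \<omega> \<omega>' (2 * t + 1) = \<omega>' 1" by (simp add: comb_seq_def)
    show ?thesis unfolding F_def fbf_Suc a b fbf_comb[OF order_refl] ..
  qed
  have "(\<integral>\<^sup>+\<xi>. F \<xi> \<partial>SS) = (\<integral>\<^sup>+\<xi>. F \<xi> \<partial>distr (SS \<Otimes>\<^sub>M SS) SS (\<lambda>(\<omega>, \<omega>'). comb_seq (2 * t) \<omega> \<omega>'))"
    by (simp add: SP.PiM_comb_seq)
  also have "\<dots> = (\<integral>\<^sup>+x. F (comb_seq (2 * t) (fst x) (snd x)) \<partial>(SS \<Otimes>\<^sub>M SS))"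
    by (subst nn_integral_distr[OF cm]) (auto simp: Fm split_beta')
  also have "\<dots> = (\<integral>\<^sup>+\<omega>. (\<integral>\<^sup>+\<omega>'. F (comb_seq (2 * t) \<omega> \<omega>') \<partial>SS) \<partial>SS)"
  proof -
    have "(\<lambda>x. F (comb_seq (2 * t) (fst x) (snd x))) \<in> borel_measurable (SS \<Otimes>\<^sub>M SS)"
      using measurable_compose[OF cm Fm] by (simp add: split_beta')
    from SP.P.nn_integral_fst[OF this] show ?thesis by simp
  qed
  also have "\<dots> = (\<integral>\<^sup>+\<omega>. (\<integral>\<^sup>+w0. (\<integral>\<^sup>+w1. ennreal ((norm (step t (fbf A Bt \<mu> L z0 \<omega> t) w0 w1 - zs))\<^sup>2) \<partial>P) \<partial>P) \<partial>SS)"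
  proof (intro nn_integral_cong)
    fix \<omega>
    define z where "z = fbf A Bt \<mu> L z0 \<omega> t"
    have Gm: "(\<lambda>x. ennreal ((norm (step t z (fst x) (snd x) - zs))\<^sup>2)) \<in> borel_measurable (P \<Otimes>\<^sub>M P)"
      using step_meas[of "\<lambda>_. z" "P \<Otimes>\<^sub>M P" fst snd t] by measurable
    show "(\<integral>\<^sup>+\<omega>'. F (comb_seq (2 * t) \<omega> \<omega>') \<partial>SS) = (\<integral>\<^sup>+w0. (\<integral>\<^sup>+w1. ennreal ((norm (step t (fbf A Bt \<mu> L z0 \<omega> t) w0 w1 - zs))\<^sup>2) \<partial>P) \<partial>P)"
      unfolding Fc z_def[symmetric]
      by (rule seq2[where G="\<lambda>w0 w1. ennreal ((norm (step t z w0 w1 - zs))\<^sup>2)", OF Gm])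
  qed
  finally show ?thesis unfolding F_def .
qed

end

lemma real_rec:
  fixes s N c :: real
  assumes s: "s > 2" and N: "N \<ge> 0" and c: "c \<ge> 0"
  shows "(1 - 2/s) * (N / ((s-1)*(s-2))) + c / s\<^sup>2 \<le> (N + c) / (s*(s-1))"
proof -
  have ne: "s \<noteq> 0" "s - 1 \<noteq> 0" "s - 2 \<noteq> 0" using s by auto
  have q: "1 - 2/s = (s-2)/s" using ne by (simp add: field_simps)
  have e1: "(1 - 2/s) * (N / ((s-1)*(s-2))) = N / (s*(s-1))"
  proof -
    have "(s-2)/s * (N/((s-1)*(s-2))) = ((s-2)*N)/((s-2)*(s*(s-1)))" by (simp add: ac_simps)
    also have "\<dots> = N/(s*(s-1))" using ne(3) by (rule mult_divide_mult_cancel_left)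
    finally show ?thesis unfolding q .
  qed
  have "s * (s - 1) \<le> s\<^sup>2" using s by (simp add: power2_eq_square algebra_simps)
  then have e2: "c / s\<^sup>2 \<le> c / (s*(s-1))"
    using s c by (intro divide_left_mono) (auto intro!: mult_pos_pos)
  show ?thesis unfolding e1 using e2 by (simp add: add_divide_distrib)
qed

lemma real_final:
  fixes T k r c :: real
  assumes T: "T \<ge> 1" and k: "k \<ge> 1" and r: "r \<ge> 0" and c: "c \<ge> 0"
  shows "(k*(k-1)*r + c*T) / ((T+k)*(T+k-1)) \<le> (k*r + 4*c) / T"
proof -
  have D: "(T+k)*(T+k-1) > 0" using T k by (intro mult_pos_pos) auto
  have h1: "0 \<le> k*r*(T*T + k*T + k*(k-1))" using T k r by (intro mult_nonneg_nonneg) auto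
  have "T * T \<le> (T+k)*(T+k-1)" using T k by (intro mult_mono) auto
  then have "T*T \<le> 4*((T+k)*(T+k-1))" using D by linarith
  then have h2: "0 \<le> c*(4*((T+k)*(T+k-1)) - T*T)" using c by (intro mult_nonneg_nonneg) auto
  have id: "(k*r + 4*c) * ((T+k)*(T+k-1)) - (k*(k-1)*r + c*T) * T
      = k*r*(T*T + k*T + k*(k-1)) + c*(4*((T+k)*(T+k-1)) - T*T)"
    by (simp add: algebra_simps)
  have "(k*(k-1)*r + c*T) * T \<le> (k*r + 4*c) * ((T+k)*(T+k-1))" using id h1 h2 by linarith
  then show ?thesis using D T by (simp add: divide_le_eq le_divide_eq mult.commute mult.left_commute)
qed

context fbf_setting begin

interpretation P: prob_space P by (rule P_prob)
interpretation SP: sequence_space P by (rule seq_space)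

definition "kap = 6 * L / \<mu>"
definition "cc = 12 * \<sigma>\<^sup>2 / \<mu>\<^sup>2"
definition "bnd r t = (kap * (kap - 1) * r + cc * real t) / ((real t + kap) * (real t + kap - 1))"
definition "aa z0 t = (\<integral>\<^sup>+\<xi>. ennreal ((norm (fbf A Bt \<mu> L z0 \<xi> t - zs))\<^sup>2) \<partial>SS)"

lemma kap_ge: "kap \<ge> 6"
  using mu_le_L mu_pos unfolding kap_def by (simp add: le_divide_eq)

lemma cc_nonneg: "cc \<ge> 0" unfolding cc_def by simp

lemma tau_s:
  shows "tau t * \<mu> = 2 / (real t + 1 + kap)" "3 * (tau t)\<^sup>2 * \<sigma>\<^sup>2 = cc / (real t + 1 + kap)\<^sup>2"
proof -
  define s where "s = real t + 1 + kap" 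
  have d: "(real t + 1) * \<mu> + 6 * L = \<mu> * s"
    using mu_pos unfolding s_def kap_def by (simp add: field_simps)
  have ta: "tau t = 2 / (\<mu> * s)" unfolding tau_def fbf_step_def d ..
  have s0: "s > 0" unfolding s_def using kap_ge by simp
  show "tau t * \<mu> = 2 / (real t + 1 + kap)" unfolding s_def[symmetric] ta using mu_pos s0 by simp
  show "3 * (tau t)\<^sup>2 * \<sigma>\<^sup>2 = cc / (real t + 1 + kap)\<^sup>2" unfolding s_def[symmetric] ta cc_def using mu_pos s0
    by (simp add: power2_eq_square field_simps)
qed

lemma bnd_nonneg: "r \<ge> 0 \<Longrightarrow> bnd r t \<ge> 0"
  unfolding bnd_def using kap_ge cc_nonneg
  by (intro divide_nonneg_pos add_nonneg_nonneg mult_nonneg_nonneg mult_pos_pos) auto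

lemma bnd_step:
  assumes r: "r \<ge> 0"
  shows "(1 - tau t * \<mu>) * bnd r t + 3 * (tau t)\<^sup>2 * \<sigma>\<^sup>2 \<le> bnd r (Suc t)"
proof -
  define s where "s = real t + 1 + kap"
  define N where "N = kap * (kap - 1) * r + cc * real t"
  have s2: "s > 2" unfolding s_def using kap_ge by simp
  have N0: "N \<ge> 0" unfolding N_def using kap_ge cc_nonneg r by simp
  have b1: "bnd r t = N / ((s - 1) * (s - 2))"
    unfolding bnd_def N_def s_def by (simp add: algebra_simps)
  have b2: "bnd r (Suc t) = (N + cc) / (s * (s - 1))"
    unfolding bnd_def N_def s_def by (simp add: algebra_simps)
  show ?thesis unfolding b1 b2 tau_s[of t, folded s_def]
    by (rule real_rec[OF s2 N0 cc_nonneg])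
qed

lemma aa_step: "aa z0 (Suc t) \<le> ennreal (1 - tau t * \<mu>) * aa z0 t + ennreal (3 * (tau t)\<^sup>2 * \<sigma>\<^sup>2)"
proof -
  have c1: "1 - tau t * \<mu> \<ge> 0" using tau_mu[of t] by simp
  have "aa z0 (Suc t) = (\<integral>\<^sup>+\<xi>. (\<integral>\<^sup>+w0. (\<integral>\<^sup>+w1. ennreal ((norm (step t (fbf A Bt \<mu> L z0 \<xi> t) w0 w1 - zs))\<^sup>2) \<partial>P) \<partial>P) \<partial>SS)"
    unfolding aa_def by (rule exp_step)
  also have "\<dots> \<le> (\<integral>\<^sup>+\<xi>. ennreal ((1 - tau t * \<mu>) * (norm (fbf A Bt \<mu> L z0 \<xi> t - zs))\<^sup>2 + 3 * (tau t)\<^sup>2 * \<sigma>\<^sup>2) \<partial>SS)"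
    by (intro nn_integral_mono step_bound)
  also have "\<dots> = (\<integral>\<^sup>+\<xi>. ennreal (1 - tau t * \<mu>) * ennreal ((norm (fbf A Bt \<mu> L z0 \<xi> t - zs))\<^sup>2) + ennreal (3 * (tau t)\<^sup>2 * \<sigma>\<^sup>2) \<partial>SS)"
    using c1 by (intro nn_integral_cong) (simp add: ennreal_plus ennreal_mult)
  also have "\<dots> = ennreal (1 - tau t * \<mu>) * aa z0 t + ennreal (3 * (tau t)\<^sup>2 * \<sigma>\<^sup>2)"
    unfolding aa_def using fbf_meas[of z0 t]
    by (subst nn_integral_add) (auto simp: nn_integral_cmult SP.P.emeasure_space_1)
  finally show ?thesis .
qed

lemma aa_bnd: "aa z0 t \<le> ennreal (bnd ((norm (z0 - zs))\<^sup>2) t)"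
proof (induction t)
  case 0
  have k: "kap * (kap - 1) \<noteq> 0" using kap_ge by simp
  have "bnd ((norm (z0 - zs))\<^sup>2) 0 = (norm (z0 - zs))\<^sup>2" unfolding bnd_def using k by simp
  then show ?case unfolding aa_def by (simp add: SP.P.emeasure_space_1)
next
  case (Suc t)
  define r where "r = (norm (z0 - zs))\<^sup>2"
  have r0: "r \<ge> 0" unfolding r_def by simp
  have c1: "1 - tau t * \<mu> \<ge> 0" using tau_mu[of t] by simp
  have "aa z0 (Suc t) \<le> ennreal (1 - tau t * \<mu>) * aa z0 t + ennreal (3 * (tau t)\<^sup>2 * \<sigma>\<^sup>2)"
    by (rule aa_step)
  also have "\<dots> \<le> ennreal (1 - tau t * \<mu>) * ennreal (bnd r t) + ennreal (3 * (tau t)\<^sup>2 * \<sigma>\<^sup>2)"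
    using Suc.IH unfolding r_def by (intro add_right_mono mult_left_mono) auto
  also have "\<dots> = ennreal ((1 - tau t * \<mu>) * bnd r t + 3 * (tau t)\<^sup>2 * \<sigma>\<^sup>2)"
    using c1 bnd_nonneg[OF r0, of t] by (simp add: ennreal_plus ennreal_mult)
  also have "\<dots> \<le> ennreal (bnd r (Suc t))"
    by (rule ennreal_leI, rule bnd_step[OF r0])
  finally show ?case unfolding r_def .
qed

definition "CC z0 = 6 * L / \<mu> * (norm (z0 - zs))\<^sup>2 + 48 * \<sigma>\<^sup>2 / \<mu>\<^sup>2"

lemma CC_nonneg: "CC z0 \<ge> 0"
  unfolding CC_def using L_pos mu_pos by simp

lemma aa_final:
  assumes T: "T \<ge> 1"
  shows "aa z0 T \<le> ennreal (CC z0 / real T)"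
proof -
  have "bnd ((norm (z0 - zs))\<^sup>2) T \<le> (kap * (norm (z0 - zs))\<^sup>2 + 4 * cc) / real T"
    unfolding bnd_def
    by (rule real_final) (use T kap_ge cc_nonneg in auto)
  also have "\<dots> = CC z0 / real T" unfolding CC_def kap_def cc_def by simp
  finally show ?thesis using aa_bnd[of z0 T] order_trans ennreal_leI by blast
qed

end

lemma level_nn: "(\<integral>\<^sup>+i. f i \<partial>level_pmf) = (\<Sum>k. ennreal ((1/2)^(Suc k)) * f (Suc k))"
proof -
  have "(\<integral>\<^sup>+i. f i \<partial>level_pmf) = (\<integral>\<^sup>+k. f (Suc k) \<partial>geometric_pmf (1/2))"
    unfolding level_pmf_def by simp
  also have "\<dots> = (\<Sum>k. ennreal (pmf (geometric_pmf (1/2)) k) * f (Suc k))"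
    by (simp add: nn_integral_measure_pmf nn_integral_count_space_nat)
  also have "\<dots> = (\<Sum>k. ennreal ((1/2)^(Suc k)) * f (Suc k))"
    by (simp add: pmf_geometric)
  finally show ?thesis .
qed

lemma level_sum_bound:
  assumes b: "\<And>k. ennreal ((1/2)^(Suc k)) * f (Suc k)
      \<le> ennreal (\<alpha> * (if Suc k \<le> K then 1 else 0) + \<beta> * (1/2)^(Suc k))"
    and a: "\<alpha> \<ge> 0" "\<beta> \<ge> 0"
  shows "(\<integral>\<^sup>+i. f i \<partial>level_pmf) \<le> ennreal (\<alpha> * real K + \<beta>)"
proof -
  define g where "g k = \<alpha> * (if k \<in> {..<K} then 1 else 0) + \<beta> * (1/2::real)^(Suc k)" for k
  have g0: "g k \<ge> 0" for k unfolding g_def using a by simp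
  have s1: "(\<lambda>k. if k \<in> {..<K} then \<alpha> else 0) sums (\<Sum>k\<in>{..<K}. \<alpha>)"
    by (rule sums_If_finite_set) simp
  have s2: "(\<lambda>k. \<beta> * ((1/2::real) * (1/2)^k)) sums (\<beta> * ((1/2) * (1 / (1 - 1/2))))"
    by (intro sums_mult geometric_sums) simp
  have "g sums (\<alpha> * real K + \<beta>)"
  proof -
    have "(\<lambda>k. (if k \<in> {..<K} then \<alpha> else 0) + \<beta> * ((1/2::real) * (1/2)^k)) sums ((\<Sum>k\<in>{..<K}. \<alpha>) + \<beta> * ((1/2) * (1 / (1 - 1/2))))"
      by (rule sums_add[OF s1 s2])
    moreover have "(\<lambda>k. (if k \<in> {..<K} then \<alpha> else 0) + \<beta> * ((1/2::real) * (1/2)^k)) = g"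
      by (auto simp: g_def fun_eq_iff)
    moreover have "(\<Sum>k\<in>{..<K}. \<alpha>) + \<beta> * ((1/2) * (1 / (1 - 1/2))) = \<alpha> * real K + \<beta>"
      by simp
    ultimately show ?thesis by (simp add: mult.commute)
  qed
  then have gs: "(\<Sum>k. ennreal (g k)) = ennreal (\<alpha> * real K + \<beta>)"
    by (rule suminf_ennreal_eq[OF g0])
  have "(\<integral>\<^sup>+i. f i \<partial>level_pmf) = (\<Sum>k. ennreal ((1/2)^(Suc k)) * f (Suc k))" by (rule level_nn)
  also have "\<dots> \<le> (\<Sum>k. ennreal (g k))"
  proof (rule suminf_le[OF _ summableI summableI])
    fix k
    have "(if Suc k \<le> K then 1 else 0) = (if k \<in> {..<K} then 1 else (0::real))" by auto
    then show "ennreal ((1/2)^(Suc k)) * f (Suc k) \<le> ennreal (g k)"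
      using b[of k] unfolding g_def by simp
  qed
  finally show ?thesis unfolding gs .
qed

lemma N_split:
  assumes N: "N \<ge> (2::nat)"
  obtains K where "K \<ge> 1" "\<And>i. 2 ^ i \<le> N \<longleftrightarrow> i \<le> K" "real K \<le> log 2 (real N)" "real N < 2 * 2 ^ K"
proof -
  obtain K where K: "2 ^ K \<le> N" "N < 2 ^ (K + 1)" using ex_power_ivl1[of 2 N] N by auto
  have K1: "K \<ge> 1"
  proof (rule ccontr)
    assume "\<not> K \<ge> 1" then have "K = 0" by simp
    then show False using K N by simp
  qed
  have iff: "2 ^ i \<le> N \<longleftrightarrow> i \<le> K" for i
  proof
    assume "2 ^ i \<le> N"
    then have "(2::nat) ^ i < 2 ^ (K + 1)" using K by simp
    then have "i < K + 1" using power_less_imp_less_exp[of 2 i "K+1"] by simp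
    then show "i \<le> K" by simp
  next
    assume "i \<le> K"
    then have "(2::nat) ^ i \<le> 2 ^ K" by (simp add: power_increasing)
    then show "2 ^ i \<le> N" using K(1) by linarith
  qed
  have lg: "real K \<le> log 2 (real N)" using K(1) by (rule le_log2_of_power)
  have "real N < 2 * 2 ^ K" using K(2) by (metis of_nat_less_iff of_nat_numeral of_nat_power power_Suc Suc_eq_plus1)
  then show ?thesis using that K1 iff lg by blast
qed

context fbf_setting begin

interpretation P: prob_space P by (rule P_prob)
interpretation SP: sequence_space P by (rule seq_space)

lemma meas_pair_pmf:
  fixes f :: "nat \<Rightarrow> (nat \<Rightarrow> 'w) \<Rightarrow> 'c::topological_space"
  assumes "\<And>i. (\<lambda>\<xi>. f i \<xi>) \<in> borel_measurable SS"
  shows "(\<lambda>x. f (fst x) (snd x)) \<in> borel_measurable (measure_pmf p \<Otimes>\<^sub>M SS)"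
proof (rule measurable_compose_countable[where f="\<lambda>i x. f i (snd x)" and g=fst])
  fix i :: nat
  show "(\<lambda>x. f i (snd x)) \<in> borel_measurable (measure_pmf p \<Otimes>\<^sub>M SS)"
    using measurable_compose[OF measurable_snd[of "measure_pmf p" SS] assms[of i]] by simp
next
  have "(\<lambda>x. x) \<in> measurable (measure_pmf p) (count_space UNIV)" by (simp add: measurable_pmf_measure1)
  from measurable_compose[OF measurable_fst this]
  show "fst \<in> measurable (measure_pmf p \<Otimes>\<^sub>M SS) (count_space UNIV)" by (simp add: comp_def)
qed

lemma out_meas: "(\<lambda>\<xi>. mlmc_out A Bt \<mu> L z0 N i \<xi>) \<in> borel_measurable SS"
  unfolding mlmc_out_def Let_def
  using fbf_meas[of z0 "2^i"] fbf_meas[of z0 "2^(i-1)"] fbf_meas[of z0 "2^0"]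
  by (cases "2 ^ i \<le> N") simp_all

lemma aa_pow: "aa z0 (2 ^ k) \<le> ennreal (CC z0 / 2 ^ k)"
  using aa_final[of "2 ^ k" z0] by simp

lemma sq_tri: "(norm (a + b :: 'a))\<^sup>2 \<le> 2 * (norm a)\<^sup>2 + 2 * (norm b)\<^sup>2"
proof -
  have "(norm (a + b))\<^sup>2 \<le> (norm a + norm b)\<^sup>2"
    by (rule power_mono) (simp_all add: norm_triangle_ineq)
  also have "\<dots> \<le> 2 * (norm a)\<^sup>2 + 2 * (norm b)\<^sup>2" by (rule sq_sum_le)
  finally show ?thesis .
qed

lemma vec_re: "(x::'b::ab_group_add) + w - z = (x - z) + w" by (simp add: algebra_simps)

lemma out_pointwise:
  assumes "i \<ge> 1"
  shows "(norm (fbf A Bt \<mu> L z0 \<xi> 1 + (2 ^ i :: real) *\<^sub>R (fbf A Bt \<mu> L z0 \<xi> (2^i) - fbf A Bt \<mu> L z0 \<xi> (2^(i-1))) - zs))\<^sup>2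
    \<le> 2 * (norm (fbf A Bt \<mu> L z0 \<xi> 1 - zs))\<^sup>2 + 4 * 4 ^ i * ((norm (fbf A Bt \<mu> L z0 \<xi> (2^i) - zs))\<^sup>2 + (norm (fbf A Bt \<mu> L z0 \<xi> (2^(i-1)) - zs))\<^sup>2)"
proof -
  define a where "a = fbf A Bt \<mu> L z0 \<xi> 1 - zs"
  define u where "u = fbf A Bt \<mu> L z0 \<xi> (2^i) - zs"
  define v where "v = fbf A Bt \<mu> L z0 \<xi> (2^(i-1)) - zs"
  have e: "fbf A Bt \<mu> L z0 \<xi> 1 + (2 ^ i :: real) *\<^sub>R (fbf A Bt \<mu> L z0 \<xi> (2^i) - fbf A Bt \<mu> L z0 \<xi> (2^(i-1))) - zs
      = a + (2 ^ i :: real) *\<^sub>R (u - v)"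
  proof -
    have uv: "u - v = fbf A Bt \<mu> L z0 \<xi> (2^i) - fbf A Bt \<mu> L z0 \<xi> (2^(i-1))"
      by (simp add: u_def v_def)
    show ?thesis unfolding uv a_def by (rule vec_re)
  qed
  have n4: "(norm ((2 ^ i :: real) *\<^sub>R (u - v)))\<^sup>2 = 4 ^ i * (norm (u - v))\<^sup>2"
  proof -
    have p4: "((2::real)^i)^2 = (2^2)^i" by (metis power_mult mult.commute)
    have "(norm ((2 ^ i :: real) *\<^sub>R (u - v)))\<^sup>2 = ((2::real)^i)^2 * (norm (u - v))\<^sup>2"
      by (simp add: power_mult_distrib)
    then show ?thesis unfolding p4 by simp
  qed
  have s1: "(norm (a + (2 ^ i :: real) *\<^sub>R (u - v)))\<^sup>2 \<le> 2 * (norm a)\<^sup>2 + 2 * (norm ((2 ^ i :: real) *\<^sub>R (u - v)))\<^sup>2"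
    by (rule sq_tri)
  have s2: "(norm (u - v))\<^sup>2 \<le> 2 * (norm u)\<^sup>2 + 2 * (norm v)\<^sup>2"
    using sq_tri[of u "- v"] by simp
  have s3: "4 ^ i * (norm (u - v))\<^sup>2 \<le> 4 ^ i * (2 * (norm u)\<^sup>2 + 2 * (norm v)\<^sup>2)"
    by (rule mult_left_mono[OF s2]) simp
  have "(norm (a + (2 ^ i :: real) *\<^sub>R (u - v)))\<^sup>2 \<le> 2 * (norm a)\<^sup>2 + 4 * 4 ^ i * ((norm u)\<^sup>2 + (norm v)\<^sup>2)"
    using s1 s3 unfolding n4 by (simp add: algebra_simps)
  then show ?thesis unfolding e a_def[symmetric] u_def[symmetric] v_def[symmetric] .
qed

end

lemma enn_mult_le:
  assumes "0 \<le> a" "0 \<le> b" "a * b \<le> c"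
  shows "ennreal a * ennreal b \<le> ennreal c"
  using assms by (simp add: ennreal_mult[symmetric] ennreal_leI)

lemma enn_comb:
  assumes "0 \<le> a" "0 \<le> b" "0 \<le> d" "0 \<le> c"
  shows "ennreal 2 * ennreal a + ennreal c * (ennreal b + ennreal d) = ennreal (2 * a + c * (b + d))"
proof -
  have 1: "ennreal (2*a + c*(b+d)) = ennreal (2*a) + ennreal (c*(b+d))" by (rule ennreal_plus) (use assms in auto)
  have 2: "ennreal (2*a) = ennreal 2 * ennreal a" by (rule ennreal_mult) (use assms in auto)
  have 3: "ennreal (c*(b+d)) = ennreal c * ennreal (b+d)" by (rule ennreal_mult) (use assms in auto)
  have 4: "ennreal (b+d) = ennreal b + ennreal d" by (rule ennreal_plus) (use assms in auto)
  show ?thesis unfolding 1 2 3 4 ..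
qed

context fbf_setting begin

interpretation P: prob_space P by (rule P_prob)
interpretation SP: sequence_space P by (rule seq_space)

lemma aa1: "aa z0 1 \<le> ennreal (CC z0)"
  using aa_final[of 1 z0] by simp

lemma Mi_bound:
  assumes i: "i \<ge> 1" "2 ^ i \<le> N"
  shows "(\<integral>\<^sup>+\<xi>. ennreal ((norm (mlmc_out A Bt \<mu> L z0 N i \<xi> - zs))\<^sup>2) \<partial>SS)
     \<le> ennreal (2 * CC z0 + 12 * 2 ^ i * CC z0)"
proof -
  define y where "y k \<xi> = fbf A Bt \<mu> L z0 \<xi> (2 ^ k)" for k \<xi>
  define n where "n k \<xi> = ennreal ((norm (y k \<xi> - zs))\<^sup>2)" for k \<xi>
  have nm: "n k \<in> borel_measurable SS" for k
    unfolding n_def y_def using fbf_meas[of z0 "2^k"] by measurable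
  have an: "(\<integral>\<^sup>+\<xi>. n k \<xi> \<partial>SS) = aa z0 (2 ^ k)" for k unfolding n_def y_def aa_def ..
  have out: "mlmc_out A Bt \<mu> L z0 N i \<xi> = fbf A Bt \<mu> L z0 \<xi> 1 + (2 ^ i :: real) *\<^sub>R (fbf A Bt \<mu> L z0 \<xi> (2^i) - fbf A Bt \<mu> L z0 \<xi> (2^(i-1)))" for \<xi>
    unfolding mlmc_out_def Let_def using i by simp
  have "(\<integral>\<^sup>+\<xi>. ennreal ((norm (mlmc_out A Bt \<mu> L z0 N i \<xi> - zs))\<^sup>2) \<partial>SS)
      \<le> (\<integral>\<^sup>+\<xi>. ennreal 2 * n 0 \<xi> + ennreal (4 * 4 ^ i) * (n i \<xi> + n (i - 1) \<xi>) \<partial>SS)"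
  proof (rule nn_integral_mono)
    fix \<xi>
    have "(norm (mlmc_out A Bt \<mu> L z0 N i \<xi> - zs))\<^sup>2
      \<le> 2 * (norm (y 0 \<xi> - zs))\<^sup>2 + 4 * 4 ^ i * ((norm (y i \<xi> - zs))\<^sup>2 + (norm (y (i - 1) \<xi> - zs))\<^sup>2)"
      unfolding out y_def using out_pointwise[OF i(1)] by simp
    moreover have eqc: "ennreal 2 * n 0 \<xi> + ennreal (4 * 4 ^ i) * (n i \<xi> + n (i - 1) \<xi>)
      = ennreal (2 * (norm (y 0 \<xi> - zs))\<^sup>2 + 4 * 4 ^ i * ((norm (y i \<xi> - zs))\<^sup>2 + (norm (y (i - 1) \<xi> - zs))\<^sup>2))"
      unfolding n_def by (rule enn_comb) auto
    ultimately show "ennreal ((norm (mlmc_out A Bt \<mu> L z0 N i \<xi> - zs))\<^sup>2) \<le> ennreal 2 * n 0 \<xi> + ennreal (4 * 4 ^ i) * (n i \<xi> + n (i - 1) \<xi>)"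
      by (simp only: eqc ennreal_leI)
  qed
  also have "\<dots> = ennreal 2 * aa z0 1 + ennreal (4 * 4 ^ i) * (aa z0 (2 ^ i) + aa z0 (2 ^ (i - 1)))"
    using nm an[of 0] an[of i] an[of "i - 1"]
    by (simp add: nn_integral_add nn_integral_cmult)
  also have "\<dots> \<le> ennreal 2 * ennreal (CC z0) + ennreal (4 * 4 ^ i) * (ennreal (CC z0 / 2 ^ i) + ennreal (CC z0 / 2 ^ (i - 1)))"
    by (intro add_mono mult_left_mono aa1 aa_pow) auto
  also have "\<dots> = ennreal (2 * CC z0 + 4 * 4 ^ i * (CC z0 / 2 ^ i + CC z0 / 2 ^ (i - 1)))"
    by (rule enn_comb) (use CC_nonneg[of z0] in auto)
  also have "2 * CC z0 + 4 * 4 ^ i * (CC z0 / 2 ^ i + CC z0 / 2 ^ (i - 1)) = 2 * CC z0 + 12 * 2 ^ i * CC z0"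
  proof -
    have p4: "(4::real) ^ i = 2 ^ i * 2 ^ i" by (metis power_mult_distrib numeral_times_numeral semiring_norm(12) semiring_norm(13))
    have p2: "(2::real) ^ i = 2 * 2 ^ (i - 1)" using i(1) by (metis Suc_diff_1 less_le_trans zero_less_one power_Suc)
    have q: "(2::real) ^ i > 0" by simp
    show ?thesis unfolding p4 using q p2 by (simp add: field_simps)
  qed
  finally show ?thesis .
qed

lemma second_moment:
  assumes N: "N \<ge> 2"
  shows "(\<integral>\<^sup>+(i, \<xi>). ennreal ((norm (mlmc_out A Bt \<mu> L z0 N i \<xi> - zs))\<^sup>2) \<partial>mlmc_space P)
       \<le> ennreal (14 * CC z0 * log 2 (real N))"
proof -
  obtain K where K: "K \<ge> 1" "\<And>i. 2 ^ i \<le> N \<longleftrightarrow> i \<le> K" "real K \<le> log 2 (real N)"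
    using N_split[OF N] by blast
  define f where "f i \<xi> = ennreal ((norm (mlmc_out A Bt \<mu> L z0 N i \<xi> - zs))\<^sup>2)" for i \<xi>
  have fm: "\<And>i. f i \<in> borel_measurable SS" unfolding f_def using out_meas[of z0 N] by measurable
  have C0: "CC z0 \<ge> 0" by (rule CC_nonneg)
  have "(\<integral>\<^sup>+(i, \<xi>). f i \<xi> \<partial>mlmc_space P) = (\<integral>\<^sup>+x. f (fst x) (snd x) \<partial>(measure_pmf level_pmf \<Otimes>\<^sub>M SS))"
    unfolding mlmc_space_def by (simp add: split_beta')
  also have "\<dots> = (\<integral>\<^sup>+i. (\<integral>\<^sup>+\<xi>. f i \<xi> \<partial>SS) \<partial>level_pmf)"
    using SP.P.nn_integral_fst[OF meas_pair_pmf[of f, OF fm]] by simp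
  also have "\<dots> \<le> ennreal ((12 * CC z0) * real K + 2 * CC z0)"
  proof (rule level_sum_bound)
    fix k
    have key: "ennreal ((1/2)^i) * (\<integral>\<^sup>+\<xi>. f i \<xi> \<partial>SS)
      \<le> ennreal (12 * CC z0 * (if i \<le> K then 1 else 0) + 2 * CC z0 * (1/2)^i)" if i1: "i \<ge> 1" for i
    proof (cases "i \<le> K")
      have h: "(1/2::real) ^ i * 2 ^ i = 1" by (simp add: power_mult_distrib[symmetric])
      case True
      then have "2 ^ i \<le> N" using K(2) by simp
      then have "ennreal ((1/2)^i) * (\<integral>\<^sup>+\<xi>. f i \<xi> \<partial>SS) \<le> ennreal ((1/2)^i) * ennreal (2 * CC z0 + 12 * 2 ^ i * CC z0)"
        unfolding f_def by (intro mult_left_mono Mi_bound) (use i1 in auto)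
      also have "\<dots> \<le> ennreal (12 * CC z0 * (if i \<le> K then 1 else 0) + 2 * CC z0 * (1/2)^i)"
      proof (rule enn_mult_le)
        show "(1/2)^i * (2 * CC z0 + 12 * 2 ^ i * CC z0) \<le> 12 * CC z0 * (if i \<le> K then 1 else 0) + 2 * CC z0 * (1/2)^i"
        proof -
          have "(1/2)^i * (2 * CC z0 + 12 * 2 ^ i * CC z0) = 2 * CC z0 * (1/2)^i + 12 * CC z0 * ((1/2)^i * 2 ^ i)"
            by (simp add: algebra_simps)
          then show ?thesis using True h by simp
        qed
      qed (use C0 in auto)
      finally show ?thesis .
    next
      case False
      then have "\<not> 2 ^ i \<le> N" using K(2) by simp
      then have "(\<integral>\<^sup>+\<xi>. f i \<xi> \<partial>SS) = aa z0 1"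
        unfolding f_def aa_def mlmc_out_def Let_def by simp
      then have "ennreal ((1/2)^i) * (\<integral>\<^sup>+\<xi>. f i \<xi> \<partial>SS) \<le> ennreal ((1/2)^i) * ennreal (CC z0)"
        using aa1 by (simp add: mult_left_mono)
      also have "\<dots> \<le> ennreal (12 * CC z0 * (if i \<le> K then 1 else 0) + 2 * CC z0 * (1/2)^i)"
        by (rule enn_mult_le) (use False C0 in auto)
      finally show ?thesis .
    qed
    show "ennreal ((1/2)^(Suc k)) * (\<integral>\<^sup>+\<xi>. f (Suc k) \<xi> \<partial>SS)
      \<le> ennreal (12 * CC z0 * (if Suc k \<le> K then 1 else 0) + 2 * CC z0 * (1/2)^(Suc k))"
      by (rule key) simp
  qed (use C0 in auto)
  also have "\<dots> \<le> ennreal (14 * CC z0 * log 2 (real N))"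
  proof (rule ennreal_leI)
    have "1 * CC z0 \<le> real K * CC z0" using K(1) C0 by (intro mult_right_mono) auto
    then have "(12 * CC z0) * real K + 2 * CC z0 \<le> 14 * CC z0 * real K" by (simp add: algebra_simps)
    also have "\<dots> \<le> 14 * CC z0 * log 2 (real N)" using K(3) C0 by (intro mult_left_mono) auto
    finally show "(12 * CC z0) * real K + 2 * CC z0 \<le> 14 * CC z0 * log 2 (real N)" .
  qed
  finally show ?thesis unfolding f_def .
qed

lemma calls_bound:
  assumes n: "n \<ge> 2"
  shows "(\<integral>\<^sup>+(i, \<xi>). ennreal (real (mlmc_calls n i)) \<partial>mlmc_space P) \<le> ennreal (4 * log 2 (real n))"
proof -
  obtain K where K: "K \<ge> 1" "\<And>i. 2 ^ i \<le> n \<longleftrightarrow> i \<le> K" "real K \<le> log 2 (real n)"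
    using N_split[OF n] by blast
  define f where "f i (\<xi>::nat \<Rightarrow> 'w) = ennreal (real (mlmc_calls n i))" for i \<xi>
  have fm: "\<And>i. f i \<in> borel_measurable SS" unfolding f_def by simp
  have "(\<integral>\<^sup>+(i, \<xi>). f i \<xi> \<partial>mlmc_space P) = (\<integral>\<^sup>+x. f (fst x) (snd x) \<partial>(measure_pmf level_pmf \<Otimes>\<^sub>M SS))"
    unfolding mlmc_space_def by (simp add: split_beta')
  also have "\<dots> = (\<integral>\<^sup>+i. (\<integral>\<^sup>+\<xi>. f i \<xi> \<partial>SS) \<partial>level_pmf)"
    using SP.P.nn_integral_fst[OF meas_pair_pmf[of f, OF fm]] by simp
  also have "\<dots> = (\<integral>\<^sup>+i. ennreal (real (mlmc_calls n i)) \<partial>level_pmf)"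
    unfolding f_def by (simp add: SP.P.emeasure_space_1)
  also have "\<dots> \<le> ennreal (2 * real K + 2)"
  proof (rule level_sum_bound)
    fix k
    have key: "ennreal ((1/2)^i) * ennreal (real (mlmc_calls n i))
      \<le> ennreal (2 * (if i \<le> K then 1 else 0) + 2 * (1/2)^i)" for i
    proof (cases "i \<le> K")
      have h: "(1/2::real) ^ i * 2 ^ i = 1" by (simp add: power_mult_distrib[symmetric])
      case True
      then have "2 ^ i \<le> n" using K(2) by simp
      then have e: "(1/2)^i * real (mlmc_calls n i) = 2" unfolding mlmc_calls_def using h by simp
      show ?thesis by (rule enn_mult_le) (use True e in auto)
    next
      case False
      then have "\<not> 2 ^ i \<le> n" using K(2) by simp
      then have e: "(1/2)^i * real (mlmc_calls n i) = 2 * (1/2)^i" unfolding mlmc_calls_def by simp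
      show ?thesis by (rule enn_mult_le) (use False e in auto)
    qed
    show "ennreal ((1/2)^(Suc k)) * ennreal (real (mlmc_calls n (Suc k)))
      \<le> ennreal (2 * (if Suc k \<le> K then 1 else 0) + 2 * (1/2)^(Suc k))"
      by (rule key)
  qed auto
  also have "\<dots> \<le> ennreal (4 * log 2 (real n))"
    using K(1) K(3) by (intro ennreal_leI) simp
  finally show ?thesis unfolding f_def .
qed

end

lemma telescope_sum:
  fixes g :: "nat \<Rightarrow> 'a::ab_group_add"
  shows "(\<Sum>a\<in>{1..K}. g a - g (a - 1)) = g K - g 0"
proof (induction K)
  case 0 then show ?case by simp
next
  case (Suc K)
  have "(\<Sum>a\<in>{1..Suc K}. g a - g (a - 1)) = (\<Sum>a\<in>{1..K}. g a - g (a - 1)) + (g (Suc K) - g K)"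
    by (simp add: sum.cl_ivl_Suc)
  then show ?case using Suc.IH by simp
qed

lemma pmf_level: "a \<ge> 1 \<Longrightarrow> pmf level_pmf a = (1/2)^a"
proof -
  assume "a \<ge> 1"
  then obtain k where k: "a = Suc k" by (cases a) auto
  have "pmf level_pmf (Suc k) = pmf (geometric_pmf (1/2)) k"
    unfolding level_pmf_def by (rule pmf_map_inj') simp
  also have "\<dots> = (1/2)^(Suc k)" by (simp add: pmf_geometric)
  finally show ?thesis using k by simp
qed

lemma set_pmf_level: "a \<in> set_pmf level_pmf \<Longrightarrow> a \<ge> 1"
  unfolding level_pmf_def by auto

context fbf_setting begin

interpretation P: prob_space P by (rule P_prob)
interpretation SP: sequence_space P by (rule seq_space)

lemma mlmc_prob: "prob_space (mlmc_space P)"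
  unfolding mlmc_space_def by (intro prob_space_pair prob_space_measure_pmf SS_prob)

lemma out_integrable:
  assumes N: "N \<ge> 2"
  shows "integrable (mlmc_space P) (\<lambda>(i, \<xi>). mlmc_out A Bt \<mu> L z0 N i \<xi>)"
proof -
  interpret M: prob_space "mlmc_space P" by (rule mlmc_prob)
  define g where "g x = mlmc_out A Bt \<mu> L z0 N (fst x) (snd x)" for x
  have ge: "(\<lambda>(i, \<xi>). mlmc_out A Bt \<mu> L z0 N i \<xi>) = g" by (auto simp: g_def fun_eq_iff)
  have gm: "g \<in> borel_measurable (mlmc_space P)"
    unfolding g_def mlmc_space_def by (rule meas_pair_pmf[OF out_meas])
  have sm: "(\<integral>\<^sup>+x. ennreal ((norm (g x - zs))\<^sup>2) \<partial>mlmc_space P) \<le> ennreal (14 * CC z0 * log 2 (real N))"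
    using second_moment[OF N, of z0] unfolding g_def by (simp add: split_beta')
  have "(\<integral>\<^sup>+x. ennreal (norm (g x)) \<partial>mlmc_space P)
      \<le> (\<integral>\<^sup>+x. ennreal (1 + norm zs) + ennreal ((norm (g x - zs))\<^sup>2) \<partial>mlmc_space P)"
  proof (rule nn_integral_mono)
    fix x
    have a: "norm (g x) \<le> norm (g x - zs) + norm zs" by (metis diff_add_cancel norm_triangle_ineq)
    have b: "norm (g x - zs) \<le> 1 + (norm (g x - zs))\<^sup>2"
    proof -
      have "0 \<le> (norm (g x - zs) - 1/2)\<^sup>2" by simp
      then show ?thesis by (simp add: power2_eq_square algebra_simps)
    qed
    have "norm (g x) \<le> (1 + norm zs) + (norm (g x - zs))\<^sup>2" using a b by simp
    then show "ennreal (norm (g x)) \<le> ennreal (1 + norm zs) + ennreal ((norm (g x - zs))\<^sup>2)"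
      by (simp add: ennreal_plus[symmetric] ennreal_leI del: ennreal_plus)
  qed
  also have "\<dots> = ennreal (1 + norm zs) + (\<integral>\<^sup>+x. ennreal ((norm (g x - zs))\<^sup>2) \<partial>mlmc_space P)"
    using gm by (subst nn_integral_add) (auto simp: M.emeasure_space_1)
  also have "\<dots> \<le> ennreal (1 + norm zs) + ennreal (14 * CC z0 * log 2 (real N))"
    using sm by (rule add_left_mono)
  also have "\<dots> < \<infinity>" by simp
  finally show ?thesis unfolding ge using gm by (simp add: integrable_iff_bounded)
qed

lemma fbf_sq_integrable: "integrable SS (\<lambda>\<xi>. (norm (fbf A Bt \<mu> L z0 \<xi> T - zs))\<^sup>2)"
proof (subst integrable_iff_bounded, intro conjI)
  show "(\<lambda>\<xi>. (norm (fbf A Bt \<mu> L z0 \<xi> T - zs))\<^sup>2) \<in> borel_measurable SS"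
    using fbf_meas[of z0 T] by measurable
  have "(\<integral>\<^sup>+\<xi>. ennreal (norm ((norm (fbf A Bt \<mu> L z0 \<xi> T - zs))\<^sup>2)) \<partial>SS) = aa z0 T"
    unfolding aa_def by simp
  also have "\<dots> < \<infinity>" using aa_bnd[of z0 T] by (simp add: le_less_trans)
  finally show "(\<integral>\<^sup>+\<xi>. ennreal (norm ((norm (fbf A Bt \<mu> L z0 \<xi> T - zs))\<^sup>2)) \<partial>SS) < \<infinity>" .
qed

lemma fbf_integrable: "integrable SS (\<lambda>\<xi>. fbf A Bt \<mu> L z0 \<xi> T - zs)"
proof (rule Bochner_Integration.integrable_bound)
  show "integrable SS (\<lambda>\<xi>. 1 + (norm (fbf A Bt \<mu> L z0 \<xi> T - zs))\<^sup>2)"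
    using fbf_sq_integrable by simp
  show "(\<lambda>\<xi>. fbf A Bt \<mu> L z0 \<xi> T - zs) \<in> borel_measurable SS" using fbf_meas[of z0 T] by measurable
  show "AE \<xi> in SS. norm (fbf A Bt \<mu> L z0 \<xi> T - zs) \<le> norm (1 + (norm (fbf A Bt \<mu> L z0 \<xi> T - zs))\<^sup>2)"
  proof (rule AE_I2)
    fix \<xi>
    define t where "t = norm (fbf A Bt \<mu> L z0 \<xi> T - zs)"
    have "0 \<le> (t - 1/2)\<^sup>2" by simp
    then have "t \<le> 1 + t\<^sup>2" by (simp add: power2_eq_square algebra_simps)
    then show "norm (fbf A Bt \<mu> L z0 \<xi> T - zs) \<le> norm (1 + (norm (fbf A Bt \<mu> L z0 \<xi> T - zs))\<^sup>2)"
      unfolding t_def[symmetric] by simp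
  qed
qed

lemma out_pmf_integral:
  assumes K: "\<And>i. 2 ^ i \<le> N \<longleftrightarrow> i \<le> K"
  shows "(\<integral>i. mlmc_out A Bt \<mu> L z0 N i \<xi> \<partial>level_pmf) = fbf A Bt \<mu> L z0 \<xi> (2 ^ K)"
proof -
  define y where "y k = fbf A Bt \<mu> L z0 \<xi> (2 ^ k)" for k
  define h where "h i = (if 2 ^ i \<le> N then (2 ^ i :: real) *\<^sub>R (y i - y (i - 1)) else 0)" for i
  have out: "mlmc_out A Bt \<mu> L z0 N i \<xi> = y 0 + h i" for i
    unfolding mlmc_out_def Let_def h_def y_def by simp
  have hi: "integrable level_pmf h"
  proof (rule measure_pmf.integrable_const_bound[where B="\<Sum>j\<le>K. norm (h j)"])
    show "AE i in level_pmf. norm (h i) \<le> (\<Sum>j\<le>K. norm (h j))"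
    proof (rule AE_I2)
      fix i
      show "norm (h i) \<le> (\<Sum>j\<le>K. norm (h j))"
      proof (cases "2 ^ i \<le> N")
        case True
        then have "i \<in> {..K}" using K by simp
        then show ?thesis by (intro member_le_sum) auto
      next
        case False
        then show ?thesis by (simp add: h_def sum_nonneg)
      qed
    qed
  qed (simp add: measurable_pmf_measure1)
  have "(\<integral>i. mlmc_out A Bt \<mu> L z0 N i \<xi> \<partial>level_pmf) = (\<integral>i. y 0 + h i \<partial>level_pmf)"
    by (simp only: out)
  also have "\<dots> = y 0 + (\<integral>i. h i \<partial>level_pmf)"
    using hi by (simp add: Bochner_Integration.integral_add)
  also have "(\<integral>i. h i \<partial>level_pmf) = (\<Sum>a\<in>{1..K}. pmf level_pmf a *\<^sub>R h a)"
  proof (rule integral_measure_pmf)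
    fix a assume a: "a \<in> set_pmf level_pmf" "h a \<noteq> 0"
    have "a \<ge> 1" using a(1) by (rule set_pmf_level)
    moreover have "2 ^ a \<le> N" using a(2) by (auto simp: h_def split: if_splits)
    ultimately show "a \<in> {1..K}" using K by simp
  qed simp
  also have "\<dots> = (\<Sum>a\<in>{1..K}. y a - y (a - 1))"
  proof (rule sum.cong[OF refl])
    fix a assume a: "a \<in> {1..K}"
    then have "2 ^ a \<le> N" using K by simp
    moreover have "(1/2::real)^a * 2^a = 1" by (simp add: power_mult_distrib[symmetric])
    ultimately show "pmf level_pmf a *\<^sub>R h a = y a - y (a - 1)"
      using a by (simp add: pmf_level h_def)
  qed
  also have "\<dots> = y K - y 0" by (rule telescope_sum)
  finally show ?thesis unfolding y_def by simp
qed

lemma bias: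
  assumes N: "N \<ge> 2"
  shows "(norm ((\<integral>(i, \<xi>). mlmc_out A Bt \<mu> L z0 N i \<xi> \<partial>mlmc_space P) - zs))\<^sup>2 \<le> 2 * CC z0 / real N"
proof -
  obtain K where K: "K \<ge> 1" "\<And>i. 2 ^ i \<le> N \<longleftrightarrow> i \<le> K" "real N < 2 * 2 ^ K"
    using N_split[OF N] by blast
  interpret PSF: pair_sigma_finite "measure_pmf level_pmf" SS
    unfolding pair_sigma_finite_def
    using prob_space_imp_sigma_finite[OF prob_space_measure_pmf] prob_space_imp_sigma_finite[OF SS_prob] by blast
  define Y where "Y \<xi> = fbf A Bt \<mu> L z0 \<xi> (2 ^ K) - zs" for \<xi>
  have Yi: "integrable SS Y" unfolding Y_def by (rule fbf_integrable)
  have Y2i: "integrable SS (\<lambda>\<xi>. (norm (Y \<xi>))\<^sup>2)" unfolding Y_def by (rule fbf_sq_integrable)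
  have nYi: "integrable SS (\<lambda>\<xi>. norm (Y \<xi>))" using Yi by simp
  have "(\<integral>(i, \<xi>). mlmc_out A Bt \<mu> L z0 N i \<xi> \<partial>mlmc_space P)
      = (\<integral>\<xi>. (\<integral>i. mlmc_out A Bt \<mu> L z0 N i \<xi> \<partial>level_pmf) \<partial>SS)"
    using PSF.integral_snd[OF out_integrable[OF N, of z0, unfolded mlmc_space_def]]
    unfolding mlmc_space_def by simp
  also have "\<dots> = (\<integral>\<xi>. fbf A Bt \<mu> L z0 \<xi> (2 ^ K) \<partial>SS)"
    using out_pmf_integral[OF K(2)] by simp
  finally have E: "(\<integral>(i, \<xi>). mlmc_out A Bt \<mu> L z0 N i \<xi> \<partial>mlmc_space P) - zs = integral\<^sup>L SS Y"
  proof -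
    assume e: "(\<integral>(i, \<xi>). mlmc_out A Bt \<mu> L z0 N i \<xi> \<partial>mlmc_space P) = (\<integral>\<xi>. fbf A Bt \<mu> L z0 \<xi> (2 ^ K) \<partial>SS)"
    have fi: "integrable SS (\<lambda>\<xi>. fbf A Bt \<mu> L z0 \<xi> (2 ^ K))"
    proof -
      have "integrable SS (\<lambda>\<xi>. Y \<xi> + zs)" using Yi by simp
      then show ?thesis unfolding Y_def by simp
    qed
    show ?thesis unfolding e Y_def using fi
      by (simp add: Bochner_Integration.integral_diff SP.P.prob_space)
  qed
  define m where "m = (\<integral>\<xi>. norm (Y \<xi>) \<partial>SS)"
  have m0: "m \<ge> 0" unfolding m_def by simp
  have n1: "norm (integral\<^sup>L SS Y) \<le> m" unfolding m_def by (rule integral_norm_bound)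
  have m2: "m\<^sup>2 \<le> (\<integral>\<xi>. (norm (Y \<xi>))\<^sup>2 \<partial>SS)"
  proof -
    have "0 \<le> (\<integral>\<xi>. (norm (Y \<xi>) - m)\<^sup>2 \<partial>SS)" by simp
    also have "(\<integral>\<xi>. (norm (Y \<xi>) - m)\<^sup>2 \<partial>SS) = (\<integral>\<xi>. (norm (Y \<xi>))\<^sup>2 + (- 2 * m) * norm (Y \<xi>) + m\<^sup>2 \<partial>SS)"
      by (rule Bochner_Integration.integral_cong) (simp_all add: power2_eq_square algebra_simps)
    also have "\<dots> = (\<integral>\<xi>. (norm (Y \<xi>))\<^sup>2 \<partial>SS) + (- 2 * m) * m + m\<^sup>2"
      using Y2i nYi by (simp add: Bochner_Integration.integral_add SP.P.prob_space m_def)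
    finally show ?thesis by (simp add: power2_eq_square)
  qed
  have Ib: "(\<integral>\<xi>. (norm (Y \<xi>))\<^sup>2 \<partial>SS) \<le> CC z0 / 2 ^ K"
  proof -
    have "ennreal (\<integral>\<xi>. (norm (Y \<xi>))\<^sup>2 \<partial>SS) = aa z0 (2 ^ K)"
      unfolding aa_def Y_def using fbf_sq_integrable[of z0 "2^K"]
      by (intro nn_integral_eq_integral[symmetric]) auto
    also have "\<dots> \<le> ennreal (CC z0 / 2 ^ K)" by (rule aa_pow)
    finally show ?thesis using CC_nonneg[of z0] by (simp add: ennreal_le_iff)
  qed
  have "(norm (integral\<^sup>L SS Y))\<^sup>2 \<le> m\<^sup>2" using n1 by (intro power_mono) auto
  also have "\<dots> \<le> CC z0 / 2 ^ K" using m2 Ib by linarith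
  also have "\<dots> \<le> 2 * CC z0 / real N"
  proof -
    have Np: "real N > 0" using N by simp
    have "CC z0 * real N \<le> CC z0 * (2 * 2 ^ K)" using K(3) CC_nonneg[of z0] by (intro mult_left_mono) auto
    then show ?thesis using Np by (simp add: divide_le_eq le_divide_eq algebra_simps)
  qed
  finally show ?thesis unfolding E .
qed

end

theorem lemmaC9:
  fixes A :: "'a::euclidean_space \<Rightarrow> 'a set"
    and B :: "'a \<Rightarrow> 'a"
    and P :: "'w measure"
    and Bt :: "'a \<Rightarrow> 'w \<Rightarrow> 'a"
    and L\<^sub>B \<mu> \<sigma> :: real
    and z0 zs :: 'a
    and N :: nat
  assumes A_mm: "maximal_monotone A"
    and B_lip: "L\<^sub>B-lipschitz_on UNIV B"
    and mu_pos: "\<mu> > 0"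
    and B_sm: "strongly_monotone \<mu> B"
    and zs_zero: "0 \<in> (\<lambda>u. u + B zs) ` A zs"
    and P_prob: "prob_space P"
    and Bt_meas: "(\<lambda>(x, w). Bt x w) \<in> borel_measurable (borel \<Otimes>\<^sub>M P)"
    and Bt_int: "\<And>x. integrable P (Bt x)"
    and Bt_unbiased: "\<And>x. (\<integral>w. Bt x w \<partial>P) = B x"
    and Bt_var: "\<And>x. (\<integral>\<^sup>+w. ennreal ((norm (Bt x w - B x))\<^sup>2) \<partial>P) \<le> ennreal (\<sigma>\<^sup>2)"
    and N_ge: "N \<ge> 2"
  shows "integrable (mlmc_space P) (\<lambda>(i, \<xi>). mlmc_out A Bt \<mu> L\<^sub>B z0 N i \<xi>)
       \<and> (norm ((\<integral>(i, \<xi>). mlmc_out A Bt \<mu> L\<^sub>B z0 N i \<xi> \<partial>mlmc_space P) - zs))\<^sup>2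
           \<le> (12 * L\<^sub>B / \<mu> * (norm (z0 - zs))\<^sup>2 + 96 * \<sigma>\<^sup>2 / \<mu>\<^sup>2) / real N
       \<and> (\<integral>\<^sup>+(i, \<xi>). ennreal ((norm (mlmc_out A Bt \<mu> L\<^sub>B z0 N i \<xi> - zs))\<^sup>2) \<partial>mlmc_space P)
           \<le> ennreal (14 * (6 * L\<^sub>B / \<mu> * (norm (z0 - zs))\<^sup>2 + 48 * \<sigma>\<^sup>2 / \<mu>\<^sup>2) * log 2 (real N))
       \<and> (\<exists>C. \<forall>n\<ge>2. (\<integral>\<^sup>+(i, \<xi>). ennreal (real (mlmc_calls n i)) \<partial>mlmc_space P)
                        \<le> ennreal (C * log 2 (real n)))"
proof -
  interpret F: fbf_setting A B P Bt "L\<^sub>B" \<mu> \<sigma> zs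
    unfolding fbf_setting_def
    using A_mm B_lip mu_pos B_sm zs_zero P_prob Bt_meas Bt_int Bt_unbiased Bt_var by blast
  have c1: "integrable (mlmc_space P) (\<lambda>(i, \<xi>). mlmc_out A Bt \<mu> L\<^sub>B z0 N i \<xi>)"
    by (rule F.out_integrable[OF N_ge])
  have cc: "2 * F.CC z0 = 12 * L\<^sub>B / \<mu> * (norm (z0 - zs))\<^sup>2 + 96 * \<sigma>\<^sup>2 / \<mu>\<^sup>2"
    unfolding F.CC_def by (simp add: algebra_simps)
  have c2: "(norm ((\<integral>(i, \<xi>). mlmc_out A Bt \<mu> L\<^sub>B z0 N i \<xi> \<partial>mlmc_space P) - zs))\<^sup>2
           \<le> (12 * L\<^sub>B / \<mu> * (norm (z0 - zs))\<^sup>2 + 96 * \<sigma>\<^sup>2 / \<mu>\<^sup>2) / real N"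
    using F.bias[OF N_ge, of z0] unfolding cc .
  have c3: "(\<integral>\<^sup>+(i, \<xi>). ennreal ((norm (mlmc_out A Bt \<mu> L\<^sub>B z0 N i \<xi> - zs))\<^sup>2) \<partial>mlmc_space P)
           \<le> ennreal (14 * (6 * L\<^sub>B / \<mu> * (norm (z0 - zs))\<^sup>2 + 48 * \<sigma>\<^sup>2 / \<mu>\<^sup>2) * log 2 (real N))"
    using F.second_moment[OF N_ge, of z0] unfolding F.CC_def .
  have c4: "\<exists>C. \<forall>n\<ge>2. (\<integral>\<^sup>+(i, \<xi>). ennreal (real (mlmc_calls n i)) \<partial>mlmc_space P)
                        \<le> ennreal (C * log 2 (real n))"
    using F.calls_bound by blast
  show ?thesis using c1 c2 c3 c4 by blast
qed


end
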